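(* Assume the linear band crossing and Band Crossing Scenario described in the context, with trajectory $(q(t),p(t))$ on $[0,t^* )$ and limit point $(q^*,p^* )$. (i) For all sufficiently small $\delta$ with $0<\delta<t^*$, the system $$\dot q_+=\partial_pE_+(p_+),\quad \dot p_+=-\partial_qW(q_+),\quad q_+(t^* )=q^*,\ p_+(t^* )=p^*$$ has a unique smooth solution $(q_+(t),p_+(t))\in\mathbb R\times U$ on $[t^*-\delta,t^*+\delta]$. This solution satisfies $(q(t),p(t))=(q_+(t),p_+(t))$ for all $t\in[t^*-\delta,t^* )$. (ii) For sufficiently small $T\ge t^*+\delta$, there exists a solution $(q_{n+1}(t),p_{n+1}(t))\in\mathbb R\times\mathcal B$ on $(t^*,T]$ of $$\dot q_{n+1}=\partial_pE_{n+1}(p_{n+1}),\quad \dot p_{n+1}=-\partial_qW(q_{n+1})$$ with $\lim_{t\downarrow t^*}(q_{n+1}(t),p_{n+1}(t))=(q^*,p^* )$ and $G(E_{n+1}(p_{n+1}(t)))>0$ for all $t\in(t^*,T]$. It satisfies $(q_+(t),p_+(t))=(q_{n+1}(t),p_{n+1}(t))$ for all $t\in(t^*,t^*+\delta]$. (iii) Consequently, the map $t\mapsto(\mathfrak q_+(t),\mathfrak p_+(t))$ is smooth as a map $[0,T]\to\mathbb R\times\mathcal B$. This map is defined as $(q(t),p(t))$ on $[0,t^*-\delta]$, as $(q_+(t),p_+(t))$ on $[t^*-\delta,t^*+\delta]$, and as $(q_{n+1}(t),p_{n+1}(t))$ on $[t^*+\delta,T]$.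
   Context: **Potentials.** Let $V:\mathbb R\to\mathbb R$ be smooth and $1$-periodic, and let $W:\mathbb R\to\mathbb R$ be smooth with all derivatives bounded. **Bloch bands.** For $p\in\mathbb R$, $H(p):=\frac12(p-i\partial_z)^2+V(z)$ acts on $1$-periodic functions. Its eigenvalues, ordered with multiplicity, are $E_1(p)\le E_2(p)\le\cdots$, with normalized eigenfunctions $\chi_m(z;p)$ (inner product $\int_0^1\bar fg$). The Brillouin zone is $\mathcal B=[0,2\pi]$, and $G(E_m(p)):=\min_{m'\ne m}|E_m(p)-E_{m'}(p)|$. **Linear band crossing.** $U\subset\mathcal B$ is open with $p^*\in U$, and: - (A1) $E_n(p^* )=E_{n+1}(p^* )$, and this is the only degeneracy of $E_n,E_{n+1}$ in $U$. - (A2) There is $M>0$ with $|E_m(p)-E_{n+1}(p)|,|E_n(p)-E_m(p)|\ge M$ for all $p\in\overline U$ and all $m\notin\{n,n+1\}$. - (A3) The maps $(E_+,\chi_+):=(E_n,\chi_n)$ for $p<p^*$ and $(E_{n+1},\chi_{n+1})$ for $p\ge p^*$, and $(E_-,\chi_-):=(E_{n+1},\chi_{n+1})$ for $p<p^*$ and $(E_n,\chi_n)$ for $p\ge p^*$, are smooth on $U$. - (A4) $\partial_pE_+(p^* )>0$ and $\partial_pE_-(p^* )<0$. **Band Crossing Scenario.** $(q_0,p_0)\in\mathbb R\times\mathcal B$ with $G(E_n(p_0))>0$, and $t^*>0$, are such that $\dot q=\partial_pE_n(p)$, $\dot p=-\partial_qW(q)$, $(q(0),p(0))=(q_0,p_0)$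 has a unique smooth solution $(q(t),p(t))\in\mathbb R\times\mathcal B$ on $[0,t^* )$. Along it $G(E_n(p(t)))>0$ for $t\in[0,t^* )$ and $\lim_{t\uparrow t^*}p(t)=p^*$. With $q^*:=\lim_{t\uparrow t^*}q(t)$, it is assumed that $-\partial_qW(q^* )>0$. *)

theory Defs
  imports "HOL-Analysis.Analysis"
begin

text \<open>C-infinity on a set S (relative to S): continuous on S, and every partial
derivative (taken along coordinate lines, relative to S, hence one-sided at
boundary points of intervals) exists on S and is again C-infinity on S.\<close>

coinductive C_inf :: "'a::euclidean_space set \<Rightarrow> ('a \<Rightarrow> 'b::real_normed_vector) \<Rightarrow> bool"
  for S :: "'a set" where
  "continuous_on S f \<Longrightarrow>
   (\<forall>i\<in>Basis. \<exists>g. (\<forall>x\<in>S. ((\<lambda>t. f (x + t *\<^sub>R i)) has_vector_derivative g x)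
                               (at 0 within {t. x + t *\<^sub>R i \<in> S})) \<and> C_inf S g)
   \<Longrightarrow> C_inf S f"

text \<open>f is an eigenfunction of H(p) = 1/2 (p - i d/dz)^2 + V acting on
1-periodic functions, with eigenvalue lam.  Note (p - i d/dz)^2 f = p^2 f - 2 i p f' - f''.\<close>

definition bloch_eigenfunction ::
  "(real \<Rightarrow> real) \<Rightarrow> real \<Rightarrow> real \<Rightarrow> (real \<Rightarrow> complex) \<Rightarrow> bool" where
  "bloch_eigenfunction V p lam f \<longleftrightarrow>
     (\<forall>z. f (z + 1) = f z) \<and> (\<exists>z. f z \<noteq> 0) \<and>
     (\<exists>f' f''. \<forall>z. (f has_vector_derivative f' z) (at z) \<and>
                   (f' has_vector_derivative f'' z) (at z) \<and>
                   (1/2) * (complex_of_real (p\<^sup>2) * f z - 2 * \<i> * complex_of_real p * f' z - f'' z)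
                     + complex_of_real (V z) * f z = complex_of_real lam * f z)"

definition lin_indep_fun :: "(real \<Rightarrow> complex) set \<Rightarrow> bool" where
  "lin_indep_fun F \<longleftrightarrow>
     (\<forall>c :: (real \<Rightarrow> complex) \<Rightarrow> complex.
        (\<forall>z. (\<Sum>f\<in>F. c f * f z) = 0) \<longrightarrow> (\<forall>f\<in>F. c f = 0))"

text \<open>Number of eigenvalues of H(p) that are \<le> lam, counted with multiplicity
(= maximal number of linearly independent eigenfunctions with eigenvalue \<le> lam).\<close>

definition bloch_count :: "(real \<Rightarrow> real) \<Rightarrow> real \<Rightarrow> real \<Rightarrow> nat" where
  "bloch_count V p lam =
     Sup {card F | F. finite F \<and> lin_indep_fun F \<and>
                      (\<forall>f\<in>F. \<exists>mu\<le>lam. bloch_eigenfunction V p mu f)}"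

text \<open>E m p, for m \<ge> 1: the m-th eigenvalue of H(p), ordered increasingly and
repeated according to multiplicity.\<close>

definition bloch_E :: "(real \<Rightarrow> real) \<Rightarrow> nat \<Rightarrow> real \<Rightarrow> real" where
  "bloch_E V m p = Inf {lam. m \<le> bloch_count V p lam}"

definition bloch_gap :: "(real \<Rightarrow> real) \<Rightarrow> nat \<Rightarrow> real \<Rightarrow> real" where
  "bloch_gap V m p = Inf {\<bar>bloch_E V m p - bloch_E V m' p\<bar> | m'. 1 \<le> m' \<and> m' \<noteq> m}"

definition flow_sol ::
  "(real \<Rightarrow> real) \<Rightarrow> (real \<Rightarrow> real) \<Rightarrow> real set \<Rightarrow> (real \<Rightarrow> real) \<Rightarrow> (real \<Rightarrow> real) \<Rightarrow> bool" where
  "flow_sol E W I q p \<longleftrightarrow>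
     (\<forall>t\<in>I. (\<exists>D. (E has_real_derivative D) (at (p t)) \<and> (q has_real_derivative D) (at t within I))
           \<and> (p has_real_derivative - deriv W (q t)) (at t within I))"

end

theory Submission
  imports Defs
begin
lemma hvd_shift_iff:
  fixes f :: "real \<Rightarrow> 'b::real_normed_vector"
  shows "((\<lambda>t. f (x + t)) has_vector_derivative D) (at 0 within {t. x + t \<in> S})
     \<longleftrightarrow> (f has_vector_derivative D) (at x within S)"
proof
  assume H: "((\<lambda>t. f (x + t)) has_vector_derivative D) (at 0 within {t. x + t \<in> S})"
  have i: "((\<lambda>y. y - x) has_vector_derivative 1) (at x within S)"
    by (auto intro!: derivative_eq_intros)
  have im: "(\<lambda>y. y - x) ` S = {t. x + t \<in> S}"
  proof (intro set_eqI iffI)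
    fix t assume "t \<in> {t. x + t \<in> S}"
    then show "t \<in> (\<lambda>y. y - x) ` S" by (intro image_eqI[of _ _ "x + t"]) auto
  qed auto
  have "((\<lambda>t. f (x + t)) \<circ> (\<lambda>y. y - x) has_vector_derivative 1 *\<^sub>R D) (at x within S)"
    by (rule vector_diff_chain_within[OF i]) (use H im in simp)
  then show "(f has_vector_derivative D) (at x within S)" by (simp add: o_def)
next
  assume H: "(f has_vector_derivative D) (at x within S)"
  have i: "((\<lambda>t. x + t) has_vector_derivative 1) (at 0 within {t. x + t \<in> S})"
    by (auto intro!: derivative_eq_intros)
  have im: "(\<lambda>t. x + t) ` {t. x + t \<in> S} = S"
  proof (intro set_eqI iffI)
    fix y assume "y \<in> S"
    then show "y \<in> (\<lambda>t. x + t) ` {t. x + t \<in> S}" by (intro image_eqI[of _ _ "y - x"]) auto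
  qed auto
  have "(f \<circ> (\<lambda>t. x + t) has_vector_derivative 1 *\<^sub>R D) (at 0 within {t. x + t \<in> S})"
    by (rule vector_diff_chain_within[OF i]) (use H im in simp)
  then show "((\<lambda>t. f (x + t)) has_vector_derivative D) (at 0 within {t. x + t \<in> S})"
    by (simp add: o_def)
qed

lemma C_inf_real_iff:
  fixes S :: "real set" and f :: "real \<Rightarrow> 'b::real_normed_vector"
  shows "C_inf S f \<longleftrightarrow> continuous_on S f \<and>
     (\<exists>g. (\<forall>x\<in>S. (f has_vector_derivative g x) (at x within S)) \<and> C_inf S g)"
  by (subst C_inf.simps) (simp add: Basis_real_def hvd_shift_iff)

lemma C_inf_real_coinduct:
  fixes S :: "real set" and f :: "real \<Rightarrow> 'b::real_normed_vector"
  assumes "X f"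
    and "\<And>f. X f \<Longrightarrow> continuous_on S f \<and>
          (\<exists>g. (\<forall>x\<in>S. (f has_vector_derivative g x) (at x within S)) \<and> (X g \<or> C_inf S g))"
  shows "C_inf S f"
  using assms(1)
proof (rule C_inf.coinduct)
  fix f assume "X f"
  from assms(2)[OF this] show "\<exists>fa. f = fa \<and> continuous_on S fa \<and>
             (\<forall>i\<in>Basis. \<exists>g. (\<forall>x\<in>S. ((\<lambda>t. fa (x + t *\<^sub>R i)) has_vector_derivative g x)
                    (at 0 within {t. x + t *\<^sub>R i \<in> S})) \<and> (X g \<or> C_inf S g))"
    by (simp add: Basis_real_def hvd_shift_iff)
qed

lemma C_infE:
  fixes S :: "real set" and f :: "real \<Rightarrow> 'b::real_normed_vector"
  assumes "C_inf S f"
  obtains g where "continuous_on S f" "\<forall>x\<in>S. (f has_vector_derivative g x) (at x within S)" "C_inf S g"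
  using assms C_inf_real_iff[of S f] by blast

lemma C_inf_cong:
  fixes S :: "real set" and f :: "real \<Rightarrow> 'b::real_normed_vector"
  assumes "C_inf S f" "\<And>x. x \<in> S \<Longrightarrow> f x = g x"
  shows "C_inf S g"
proof -
  have "\<exists>f. C_inf S f \<and> (\<forall>x\<in>S. f x = g x)" using assms by blast
  then show ?thesis
  proof (rule C_inf_real_coinduct)
    fix h :: "real \<Rightarrow> 'b" assume "\<exists>f. C_inf S f \<and> (\<forall>x\<in>S. f x = h x)"
    then obtain f where f: "C_inf S f" "\<forall>x\<in>S. f x = h x" by blast
    then obtain g where g: "continuous_on S f" "\<forall>x\<in>S. (f has_vector_derivative g x) (at x within S)" "C_inf S g"
      by (metis C_infE)
    have "continuous_on S h" using g(1) f(2) continuous_on_cong by force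
    moreover have "\<forall>x\<in>S. (h has_vector_derivative g x) (at x within S)"
      using g(2) f(2) by (metis has_vector_derivative_transform)
    ultimately show "continuous_on S h \<and>
          (\<exists>g. (\<forall>x\<in>S. (h has_vector_derivative g x) (at x within S)) \<and> ((\<exists>f. C_inf S f \<and> (\<forall>x\<in>S. f x = g x)) \<or> C_inf S g))"
      using g(3) by blast
  qed
qed

lemma C_inf_subset:
  fixes S :: "real set" and f :: "real \<Rightarrow> 'b::real_normed_vector"
  assumes "C_inf S f" "T \<subseteq> S"
  shows "C_inf T f"
proof -
  from assms(1) show ?thesis
  proof (rule C_inf_real_coinduct[where X="C_inf S"])
    fix h :: "real \<Rightarrow> 'b" assume "C_inf S h"
    then obtain g where g: "continuous_on S h" "\<forall>x\<in>S. (h has_vector_derivative g x) (at x within S)" "C_inf S g"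
      by (metis C_infE)
    show "continuous_on T h \<and> (\<exists>g. (\<forall>x\<in>T. (h has_vector_derivative g x) (at x within T)) \<and> (C_inf S g \<or> C_inf T g))"
      using g assms(2) by (meson continuous_on_subset has_vector_derivative_within_subset subsetD)
  qed
qed

lemma C_inf_const:
  fixes S :: "real set"
  shows "C_inf S (\<lambda>x. c :: 'b::real_normed_vector)"
proof -
  show ?thesis
  proof (rule C_inf_real_coinduct[where X="\<lambda>h. \<exists>c. h = (\<lambda>x. c)"])
    show "\<exists>c'. (\<lambda>x. c) = (\<lambda>x. c')" by blast
  next
    fix h :: "real \<Rightarrow> 'b" assume "\<exists>c. h = (\<lambda>x. c)"
    then obtain c where "h = (\<lambda>x. c)" by blast
    then show "continuous_on S h \<and> (\<exists>g. (\<forall>x\<in>S. (h has_vector_derivative g x) (at x within S)) \<and> ((\<exists>c. g = (\<lambda>x. c)) \<or> C_inf S g))"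
      by (auto intro!: exI[of _ "\<lambda>x. 0"] derivative_eq_intros)
  qed
qed

lemma C_inf_id:
  fixes S :: "real set"
  shows "C_inf S (\<lambda>x. x)"
  by (subst C_inf_real_iff) (auto intro!: exI[of _ "\<lambda>x. 1"] derivative_eq_intros C_inf_const continuous_intros)

definition Dv :: "real set \<Rightarrow> (real \<Rightarrow> real) \<Rightarrow> real \<Rightarrow> real" where
  "Dv S f = (SOME g. (\<forall>x\<in>S. (f has_real_derivative g x) (at x within S)) \<and> C_inf S g)"

lemma Dv:
  fixes S :: "real set"
  assumes "C_inf S f"
  shows "\<forall>x\<in>S. (f has_real_derivative Dv S f x) (at x within S)" "C_inf S (Dv S f)"
        "continuous_on S f"
proof -
  have "\<exists>g. (\<forall>x\<in>S. (f has_real_derivative g x) (at x within S)) \<and> C_inf S g"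
    using assms by (metis C_infE has_real_derivative_iff_has_vector_derivative)
  from someI_ex[OF this] show "\<forall>x\<in>S. (f has_real_derivative Dv S f x) (at x within S)" "C_inf S (Dv S f)"
    unfolding Dv_def by blast+
  show "continuous_on S f" using assms by (metis C_infE)
qed

definition sp :: "((real \<Rightarrow> real) \<times> (real \<Rightarrow> real)) list \<Rightarrow> real \<Rightarrow> real" where
  "sp xs = (\<lambda>x. \<Sum>(f,g)\<leftarrow>xs. f x * g x)"

lemma sp_simps: "sp [] = (\<lambda>x. 0)" "sp ((f,g)#xs) = (\<lambda>x. f x * g x + sp xs x)"
  by (auto simp: sp_def)

lemma sp_append: "sp (xs @ ys) = (\<lambda>x. sp xs x + sp ys x)"
  by (auto simp: sp_def)

lemma sp_deriv:
  assumes "\<forall>(f,g)\<in>set xs. C_inf S f \<and> C_inf S g"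
  shows "\<forall>x\<in>S. (sp xs has_real_derivative sp (concat (map (\<lambda>(f,g). [(Dv S f, g), (f, Dv S g)]) xs)) x) (at x within S)"
  using assms
proof (induction xs)
  case Nil
  then show ?case by (auto simp: sp_simps)
next
  case (Cons a xs)
  obtain f g where a: "a = (f,g)" by fastforce
  have f: "C_inf S f" and g: "C_inf S g" using Cons.prems a by auto
  show ?case
  proof
    fix x assume x: "x \<in> S"
    have IH: "(sp xs has_real_derivative sp (concat (map (\<lambda>(f,g). [(Dv S f, g), (f, Dv S g)]) xs)) x) (at x within S)"
      using Cons x by auto
    have df: "(f has_real_derivative Dv S f x) (at x within S)" using Dv(1)[OF f] x by auto
    have dg: "(g has_real_derivative Dv S g x) (at x within S)" using Dv(1)[OF g] x by auto
    have dm: "((\<lambda>x. f x * g x) has_real_derivative (Dv S f x * g x + f x * Dv S g x)) (at x within S)"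
      using DERIV_mult'[OF df dg] by (simp add: algebra_simps)
    have "((\<lambda>x. f x * g x + sp xs x) has_real_derivative
        (Dv S f x * g x + f x * Dv S g x) + sp (concat (map (\<lambda>(f,g). [(Dv S f, g), (f, Dv S g)]) xs)) x) (at x within S)"
      by (intro DERIV_add dm IH)
    moreover have "sp (a # xs) = (\<lambda>x. f x * g x + sp xs x)" by (simp add: a sp_simps)
    moreover have "sp (concat (map (\<lambda>(f,g). [(Dv S f, g), (f, Dv S g)]) (a # xs))) x
       = (Dv S f x * g x + f x * Dv S g x) + sp (concat (map (\<lambda>(f,g). [(Dv S f, g), (f, Dv S g)]) xs)) x"
      by (simp only: a list.map concat.simps sp_append sp_simps prod.case append.simps add.assoc) 
    ultimately show "(sp (a # xs) has_real_derivative sp (concat (map (\<lambda>(f,g). [(Dv S f, g), (f, Dv S g)]) (a # xs))) x) (at x within S)"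
      by simp
  qed
qed

lemma C_inf_sp:
  fixes S :: "real set"
  assumes "\<forall>(f,g)\<in>set xs. C_inf S f \<and> C_inf S g"
  shows "C_inf S (sp xs)"
proof -
  let ?X = "\<lambda>h. \<exists>xs. (\<forall>(f,g)\<in>set xs. C_inf S f \<and> C_inf S g) \<and> h = sp xs"
  have "?X (sp xs)" using assms by blast
  then show ?thesis
  proof (rule C_inf_real_coinduct[where X="\<lambda>h. \<exists>xs. (\<forall>(f,g)\<in>set xs. C_inf S f \<and> C_inf S g) \<and> h = sp xs"])
    fix h assume "?X h"
    then obtain xs where xs: "\<forall>(f,g)\<in>set xs. C_inf S f \<and> C_inf S g" "h = sp xs" by blast
    let ?ys = "concat (map (\<lambda>(f,g). [(Dv S f, g), (f, Dv S g)]) xs)"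
    have d: "\<forall>x\<in>S. (h has_vector_derivative sp ?ys x) (at x within S)"
      using sp_deriv[OF xs(1)] xs(2) by (simp add: has_real_derivative_iff_has_vector_derivative)
    have "\<forall>p\<in>set ?ys. C_inf S (fst p) \<and> C_inf S (snd p)"
    proof
      fix p assume "p \<in> set ?ys"
      then obtain f g where fg: "(f,g) \<in> set xs" "p = (Dv S f, g) \<or> p = (f, Dv S g)" by auto
      then have "C_inf S f" "C_inf S g" using xs(1) by auto
      then show "C_inf S (fst p) \<and> C_inf S (snd p)" using fg(2) Dv(2) by auto
    qed
    then have "?X (sp ?ys)" by (intro exI[of _ "?ys"]) (simp add: case_prod_beta)
    moreover have "continuous_on S h"
      unfolding continuous_on_eq_continuous_within using d has_vector_derivative_continuous by blast
    ultimately show "continuous_on S h \<and> (\<exists>g. (\<forall>x\<in>S. (h has_vector_derivative g x) (at x within S)) \<and> (?X g \<or> C_inf S g))"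
      using d by blast
  qed
qed

lemma C_inf_mult:
  fixes S :: "real set" and f g :: "real \<Rightarrow> real"
  assumes "C_inf S f" "C_inf S g"
  shows "C_inf S (\<lambda>x. f x * g x)"
proof -
  have "C_inf S (sp [(f,g)])" using assms by (intro C_inf_sp) auto
  then show ?thesis by (simp add: sp_simps)
qed

lemma C_inf_add:
  fixes S :: "real set" and f g :: "real \<Rightarrow> real"
  assumes "C_inf S f" "C_inf S g"
  shows "C_inf S (\<lambda>x. f x + g x)"
proof -
  have "C_inf S (sp [(f,\<lambda>x. 1), (g, \<lambda>x. 1)])" using assms C_inf_const by (intro C_inf_sp) auto
  then show ?thesis by (simp add: sp_simps)
qed

lemma C_inf_uminus:
  fixes S :: "real set" and f :: "real \<Rightarrow> real"
  assumes "C_inf S f"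
  shows "C_inf S (\<lambda>x. - f x)"
  using C_inf_mult[OF C_inf_const[of S "-1"] assms] by simp

lemma C_inf_pair:
  fixes S :: "real set" and f g :: "real \<Rightarrow> real"
  assumes "C_inf S f" "C_inf S g"
  shows "C_inf S (\<lambda>x. (f x, g x))"
proof -
  let ?X = "\<lambda>h. \<exists>f g. C_inf S f \<and> C_inf S g \<and> h = (\<lambda>x. (f x, g x))"
  have "?X (\<lambda>x. (f x, g x))" using assms by blast
  then show ?thesis
  proof (rule C_inf_real_coinduct[where X="\<lambda>h. \<exists>f g. C_inf S f \<and> C_inf S g \<and> h = (\<lambda>x. (f x, g x))"])
    fix h :: "real \<Rightarrow> real \<times> real" assume "?X h"
    then obtain f g :: "real \<Rightarrow> real" where fg: "C_inf S f" "C_inf S g" "h = (\<lambda>x. (f x, g x))" by blast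
    have "\<forall>x\<in>S. (h has_vector_derivative (Dv S f x, Dv S g x)) (at x within S)"
      using Dv(1)[OF fg(1)] Dv(1)[OF fg(2)] fg(3)
      by (auto intro!: has_vector_derivative_Pair simp: has_real_derivative_iff_has_vector_derivative)
    moreover have "?X (\<lambda>x. (Dv S f x, Dv S g x))" using Dv(2) fg by blast
    moreover have "continuous_on S h" using Dv(3)[OF fg(1)] Dv(3)[OF fg(2)] fg(3)
      by (auto intro!: continuous_on_Pair)
    ultimately show "continuous_on S h \<and> (\<exists>g. (\<forall>x\<in>S. (h has_vector_derivative g x) (at x within S)) \<and> (?X g \<or> C_inf S g))"
      by (intro conjI exI[of _ "\<lambda>x. (Dv S f x, Dv S g x)"]) auto
  qed
qed

lemma at_within_loc:
  fixes S Op :: "real set"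
  assumes "open Op" "x \<in> Op"
  shows "at x within (S \<inter> Op) = at x within S"
  by (rule at_within_nhd[OF assms(2,1)]) auto

lemma C_inf_glue:
  fixes S :: "real set" and f :: "real \<Rightarrow> 'b::real_normed_vector"
  assumes oA: "open OA" and oB: "open OB" and cov: "S \<subseteq> OA \<union> OB"
    and fA: "C_inf (S \<inter> OA) f" and fB: "C_inf (S \<inter> OB) f"
    and nb: "\<And>x. x \<in> S \<Longrightarrow> at x within S \<noteq> bot"
  shows "C_inf S f"
proof -
  let ?X = "\<lambda>h. C_inf (S \<inter> OA) h \<and> C_inf (S \<inter> OB) h"
  show ?thesis
  proof (rule C_inf_real_coinduct[where X="\<lambda>h. C_inf (S \<inter> OA) h \<and> C_inf (S \<inter> OB) h"])
    show "C_inf (S \<inter> OA) f \<and> C_inf (S \<inter> OB) f" using fA fB by blast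
  next
    fix h :: "real \<Rightarrow> 'b" assume "?X h"
    then have hA: "C_inf (S \<inter> OA) h" and hB: "C_inf (S \<inter> OB) h" by auto
    obtain ga where ga: "continuous_on (S \<inter> OA) h" "\<forall>x\<in>S \<inter> OA. (h has_vector_derivative ga x) (at x within S \<inter> OA)" "C_inf (S \<inter> OA) ga"
      using C_infE[OF hA] by blast
    obtain gb where gb: "continuous_on (S \<inter> OB) h" "\<forall>x\<in>S \<inter> OB. (h has_vector_derivative gb x) (at x within S \<inter> OB)" "C_inf (S \<inter> OB) gb"
      using C_infE[OF hB] by blast
    define g where "g x = (if x \<in> OA then ga x else gb x)" for x
    have dA: "(h has_vector_derivative ga x) (at x within S)" if "x \<in> S" "x \<in> OA" for x
      using ga(2) that at_within_loc[OF oA that(2), of S] by (metis IntI)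
    have dB: "(h has_vector_derivative gb x) (at x within S)" if "x \<in> S" "x \<in> OB" for x
      using gb(2) that at_within_loc[OF oB that(2), of S] by (metis IntI)
    have cA: "continuous (at x within S) h" if "x \<in> S" "x \<in> OA" for x
      using dA[OF that] has_vector_derivative_continuous by blast
    have cB: "continuous (at x within S) h" if "x \<in> S" "x \<in> OB" for x
      using dB[OF that] has_vector_derivative_continuous by blast
    have cont: "continuous_on S h"
      unfolding continuous_on_eq_continuous_within using cA cB cov by blast
    have der: "\<forall>x\<in>S. (h has_vector_derivative g x) (at x within S)"
      using dA dB cov unfolding g_def by auto
    have "C_inf (S \<inter> OA) g" using ga(3) by (rule C_inf_cong) (auto simp: g_def)
    moreover have "C_inf (S \<inter> OB) g"
    proof (rule C_inf_cong[OF gb(3)])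
      fix x assume x: "x \<in> S \<inter> OB"
      show "gb x = g x"
      proof (cases "x \<in> OA")
        case True
        then show ?thesis
          using vector_derivative_unique_within[OF nb dA dB] x unfolding g_def by auto
      qed (auto simp: g_def)
    qed
    ultimately show "continuous_on S h \<and> (\<exists>g. (\<forall>x\<in>S. (h has_vector_derivative g x) (at x within S)) \<and> (?X g \<or> C_inf S g))"
      using cont der by blast
  qed
qed

lemma C_inf_open_deriv:
  fixes U :: "real set"
  assumes "open U" "C_inf U f" "x \<in> U"
  shows "(f has_real_derivative Dv U f x) (at x)"
  using Dv(1)[OF assms(2)] assms at_within_open by fastforce

definition cp :: "(real \<Rightarrow> real) \<Rightarrow> (real \<Rightarrow> real) \<Rightarrow> ((real \<Rightarrow> real) \<times> (real \<Rightarrow> real)) list \<Rightarrow> real \<Rightarrow> real" where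
  "cp q p xs = (\<lambda>t. \<Sum>(a,b)\<leftarrow>xs. a (q t) * b (p t))"

lemma cp_simps: "cp q p [] = (\<lambda>x. 0)" "cp q p ((a,b)#xs) = (\<lambda>t. a (q t) * b (p t) + cp q p xs t)"
  by (auto simp: cp_def)

lemma cp_append: "cp q p (xs @ ys) = (\<lambda>x. cp q p xs x + cp q p ys x)"
  by (auto simp: cp_def)

lemma cp_deriv:
  fixes I U :: "real set" and q p e w :: "real \<Rightarrow> real"
  assumes U: "open U"
    and pU: "\<forall>t\<in>I. p t \<in> U"
    and dq: "\<forall>t\<in>I. (q has_real_derivative e (p t)) (at t within I)"
    and dp: "\<forall>t\<in>I. (p has_real_derivative - w (q t)) (at t within I)"
    and xs: "\<forall>c\<in>set xs. C_inf UNIV (fst c) \<and> C_inf U (snd c)"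
  shows "\<forall>t\<in>I. (cp q p xs has_real_derivative
           cp q p (concat (map (\<lambda>(a,b). [(Dv UNIV a, \<lambda>y. e y * b y), (\<lambda>x. a x * - w x, Dv U b)]) xs)) t) (at t within I)"
  using xs
proof (induction xs)
  case Nil
  then show ?case by (auto simp: cp_simps)
next
  case (Cons c xs)
  obtain a b where c: "c = (a,b)" by fastforce
  have a: "C_inf UNIV a" and b: "C_inf U b" using Cons.prems c by auto
  show ?case
  proof
    fix t assume t: "t \<in> I"
    let ?F = "\<lambda>(a,b). [(Dv UNIV a, \<lambda>y. e y * b y), (\<lambda>x. a x * - w x, Dv U b)]"
    have IH: "(cp q p xs has_real_derivative cp q p (concat (map ?F xs)) t) (at t within I)"
      using Cons t by auto
    have da: "(a has_real_derivative Dv UNIV a (q t)) (at (q t))"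
      using C_inf_open_deriv[OF open_UNIV a] by auto
    have db: "(b has_real_derivative Dv U b (p t)) (at (p t))"
      using C_inf_open_deriv[OF U b] pU t by auto
    have daq: "((\<lambda>t. a (q t)) has_real_derivative Dv UNIV a (q t) * e (p t)) (at t within I)"
      using DERIV_chain[where f=a and g=q and x=t, OF da, of "e (p t)" I] dq t by (simp add: o_def)
    have dbp: "((\<lambda>t. b (p t)) has_real_derivative Dv U b (p t) * - w (q t)) (at t within I)"
      using DERIV_chain[where f=b and g=p and x=t, OF db, of "- w (q t)" I] dp t by (simp add: o_def)
    have dm: "((\<lambda>t. a (q t) * b (p t)) has_real_derivative
         (Dv UNIV a (q t) * (e (p t) * b (p t)) + (a (q t) * - w (q t)) * Dv U b (p t))) (at t within I)"
      using DERIV_mult'[OF daq dbp] by (simp add: algebra_simps)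
    have "((\<lambda>t. a (q t) * b (p t) + cp q p xs t) has_real_derivative
        (Dv UNIV a (q t) * (e (p t) * b (p t)) + (a (q t) * - w (q t)) * Dv U b (p t)) + cp q p (concat (map ?F xs)) t) (at t within I)"
      by (intro DERIV_add dm IH)
    moreover have "cp q p (c # xs) = (\<lambda>t. a (q t) * b (p t) + cp q p xs t)" by (simp add: c cp_simps)
    moreover have "cp q p (concat (map ?F (c # xs))) t
       = (Dv UNIV a (q t) * (e (p t) * b (p t)) + (a (q t) * - w (q t)) * Dv U b (p t)) + cp q p (concat (map ?F xs)) t"
      by (simp only: c list.map concat.simps cp_append cp_simps prod.case append.simps add.assoc)
    ultimately show "(cp q p (c # xs) has_real_derivative cp q p (concat (map ?F (c # xs))) t) (at t within I)"
      by simp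
  qed
qed

lemma sol_C_inf:
  fixes I U :: "real set" and q p e w :: "real \<Rightarrow> real"
  assumes U: "open U" and e: "C_inf U e" and w: "C_inf UNIV w"
    and pU: "\<forall>t\<in>I. p t \<in> U"
    and dq: "\<forall>t\<in>I. (q has_real_derivative e (p t)) (at t within I)"
    and dp: "\<forall>t\<in>I. (p has_real_derivative - w (q t)) (at t within I)"
  shows "C_inf I (\<lambda>t. (q t, p t))"
proof -
  let ?X = "\<lambda>h. \<exists>xs. (\<forall>c\<in>set xs. C_inf UNIV (fst c) \<and> C_inf U (snd c)) \<and> h = cp q p xs"
  have main: "C_inf I (cp q p xs)" if "\<forall>c\<in>set xs. C_inf UNIV (fst c) \<and> C_inf U (snd c)" for xs
  proof (rule C_inf_real_coinduct[where X="\<lambda>h. \<exists>xs. (\<forall>c\<in>set xs. C_inf UNIV (fst c) \<and> C_inf U (snd c)) \<and> h = cp q p xs"])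
    show "?X (cp q p xs)" using that by blast
  next
    fix h :: "real \<Rightarrow> real" assume "?X h"
    then obtain xs where xs: "\<forall>c\<in>set xs. C_inf UNIV (fst c) \<and> C_inf U (snd c)" "h = cp q p xs" by blast
    let ?ys = "concat (map (\<lambda>(a,b). [(Dv UNIV a, \<lambda>y. e y * b y), (\<lambda>x. a x * - w x, Dv U b)]) xs)"
    have d: "\<forall>t\<in>I. (h has_vector_derivative cp q p ?ys t) (at t within I)"
      using cp_deriv[OF U pU dq dp xs(1)] xs(2) by (simp add: has_real_derivative_iff_has_vector_derivative)
    have "\<forall>c\<in>set ?ys. C_inf UNIV (fst c) \<and> C_inf U (snd c)"
    proof
      fix c assume "c \<in> set ?ys"
      then obtain a b where ab: "(a,b) \<in> set xs" "c = (Dv UNIV a, \<lambda>y. e y * b y) \<or> c = (\<lambda>x. a x * - w x, Dv U b)" by auto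
      then have "C_inf UNIV a" "C_inf U b" using xs(1) by auto
      then show "C_inf UNIV (fst c) \<and> C_inf U (snd c)"
        using ab(2) Dv(2) C_inf_mult C_inf_uminus e w by auto
    qed
    then have "?X (cp q p ?ys)" by (intro exI[of _ "?ys"]) simp
    moreover have "continuous_on I h"
      unfolding continuous_on_eq_continuous_within using d has_vector_derivative_continuous by blast
    ultimately show "continuous_on I h \<and> (\<exists>g. (\<forall>x\<in>I. (h has_vector_derivative g x) (at x within I)) \<and> (?X g \<or> C_inf I g))"
      using d by blast
  qed
  have "C_inf I (cp q p [(\<lambda>x. x, \<lambda>x. 1)])" by (rule main) (auto intro: C_inf_id C_inf_const)
  then have cq: "C_inf I q" by (simp add: cp_simps)
  have "C_inf I (cp q p [(\<lambda>x. 1, \<lambda>x. x)])" by (rule main) (auto intro: C_inf_id C_inf_const)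
  then have cpp: "C_inf I p" by (simp add: cp_simps)
  show ?thesis using C_inf_pair[OF cq cpp] .
qed

lemma deriv_nonpos_mono:
  fixes f f' :: "real \<Rightarrow> real"
  assumes ab: "a \<le> b" and sub: "{a..b} \<subseteq> K"
    and d: "\<forall>x\<in>K. (f has_real_derivative f' x) (at x within K)"
    and nonpos: "\<forall>x\<in>{a..b}. f' x \<le> 0"
  shows "f b \<le> f a"
proof (cases "a = b")
  case False
  then have ab': "a < b" using ab by auto
  have cont: "continuous_on {a..b} f"
  proof -
    have "\<forall>x\<in>{a..b}. continuous (at x within K) f"
      using d sub by (meson DERIV_continuous subsetD)
    then show ?thesis
      unfolding continuous_on_eq_continuous_within using continuous_within_subset sub by blast
  qed
  moreover have der: "(f has_derivative (\<lambda>h. f' x * h)) (at x)" if "a < x" "x < b" for x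
  proof -
    have "x \<in> interior K"
      using interior_mono[OF order.trans[OF greaterThanLessThan_subseteq_atLeastAtMost_iff[THEN iffD2] sub]] that
      by (metis interior_open open_greaterThanLessThan greaterThanLessThan_iff order_refl subsetD)
    then have "at x within K = at x" by (rule at_within_interior)
    moreover have "x \<in> K" using that sub by auto
    ultimately have "(f has_real_derivative f' x) (at x)" using d by metis
    then show ?thesis by (simp add: has_field_derivative_def)
  qed
  obtain \<xi> where "a < \<xi>" "\<xi> < b" "f b - f a = f' \<xi> * (b - a)"
    by (rule mvt[OF ab' cont der]) auto
  moreover have "f' \<xi> \<le> 0" using nonpos \<open>a < \<xi>\<close> \<open>\<xi> < b\<close> by auto
  ultimately show ?thesis using ab' mult_nonpos_nonneg[of "f' \<xi>" "b - a"] by linarith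
next
  case True
  then show ?thesis by simp
qed

lemma gronwall_zero:
  fixes \<phi> \<phi>' :: "real \<Rightarrow> real"
  assumes K: "is_interval K" and t0: "t0 \<in> K" and z: "\<phi> t0 = 0"
    and d: "\<forall>t\<in>K. (\<phi> has_real_derivative \<phi>' t) (at t within K)"
    and bnd: "\<forall>t\<in>K. \<bar>\<phi>' t\<bar> \<le> C * \<phi> t" and nn: "\<forall>t\<in>K. 0 \<le> \<phi> t"
  shows "\<forall>t\<in>K. \<phi> t = 0"
proof
  fix t assume t: "t \<in> K"
  have sub: "{x..y} \<subseteq> K" if "x \<in> K" "y \<in> K" for x y
    using mem_is_interval_1_I[OF K that(1) that(2)] by auto
  show "\<phi> t = 0"
  proof (cases "t0 \<le> t")
    case True
    let ?\<psi> = "\<lambda>s. exp (- C * s) * \<phi> s"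
    have dpsi: "\<forall>s\<in>K. (?\<psi> has_real_derivative (exp (- C * s) * (\<phi>' s - C * \<phi> s))) (at s within K)"
    proof
      fix s assume s: "s \<in> K"
      have "((\<lambda>s. exp (- C * s)) has_real_derivative exp (- C * s) * (- C)) (at s within K)"
        by (auto intro!: derivative_eq_intros)
      from DERIV_mult[OF this d[rule_format, OF s]]
      show "(?\<psi> has_real_derivative (exp (- C * s) * (\<phi>' s - C * \<phi> s))) (at s within K)"
        by (simp add: algebra_simps)
    qed
    have "?\<psi> t \<le> ?\<psi> t0"
    proof (rule deriv_nonpos_mono[OF True sub[OF t0 t] dpsi], rule ballI)
      fix s assume "s \<in> {t0..t}"
      then have s: "s \<in> K" using sub[OF t0 t] by auto
      have "\<phi>' s \<le> C * \<phi> s" using bnd s abs_le_D1 by blast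
      then have "\<phi>' s - C * \<phi> s \<le> 0" by simp
      then show "exp (- C * s) * (\<phi>' s - C * \<phi> s) \<le> 0" by (simp add: mult_nonneg_nonpos)
    qed
    then have "\<phi> t \<le> 0" using z by (simp add: zero_le_mult_iff mult_le_0_iff)
    then show ?thesis using nn t by force
  next
    case False
    then have tt0: "t \<le> t0" by simp
    let ?\<chi> = "\<lambda>s. - (exp (C * s) * \<phi> s)"
    have dchi: "\<forall>s\<in>K. (?\<chi> has_real_derivative - (exp (C * s) * (C * \<phi> s + \<phi>' s))) (at s within K)"
    proof
      fix s assume s: "s \<in> K"
      have "((\<lambda>s. exp (C * s)) has_real_derivative exp (C * s) * C) (at s within K)"
        by (auto intro!: derivative_eq_intros)
      from DERIV_minus[OF DERIV_mult[OF this d[rule_format, OF s]]]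
      show "(?\<chi> has_real_derivative - (exp (C * s) * (C * \<phi> s + \<phi>' s))) (at s within K)"
        by (simp add: algebra_simps)
    qed
    have "?\<chi> t0 \<le> ?\<chi> t"
    proof (rule deriv_nonpos_mono[OF tt0 sub[OF t t0] dchi], rule ballI)
      fix s assume "s \<in> {t..t0}"
      then have s: "s \<in> K" using sub[OF t t0] by auto
      have "- \<phi>' s \<le> C * \<phi> s" using bnd s abs_le_D2 by blast
      then have "0 \<le> C * \<phi> s + \<phi>' s" by simp
      then show "- (exp (C * s) * (C * \<phi> s + \<phi>' s)) \<le> 0" by simp
    qed
    then have "\<phi> t \<le> 0" using z by (simp add: zero_le_mult_iff mult_le_0_iff)
    then show ?thesis using nn t by force
  qed
qed

lemma gronwall_left_limit:
  fixes \<phi> \<phi>' :: "real \<Rightarrow> real"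
  assumes d: "\<forall>t\<in>{c..<b}. (\<phi> has_real_derivative \<phi>' t) (at t within {c..<b})"
    and bnd: "\<forall>t\<in>{c..<b}. \<bar>\<phi>' t\<bar> \<le> C * \<phi> t" and nn: "\<forall>t\<in>{c..<b}. 0 \<le> \<phi> t"
    and lim: "(\<phi> \<longlongrightarrow> 0) (at_left b)"
  shows "\<forall>t\<in>{c..<b}. \<phi> t = 0"
proof
  fix t assume t: "t \<in> {c..<b}"
  let ?\<chi> = "\<lambda>s. - (exp (C * s) * \<phi> s)"
  have dchi: "\<forall>s\<in>{c..<b}. (?\<chi> has_real_derivative - (exp (C * s) * (C * \<phi> s + \<phi>' s))) (at s within {c..<b})"
  proof
    fix s assume s: "s \<in> {c..<b}"
    have "((\<lambda>s. exp (C * s)) has_real_derivative exp (C * s) * C) (at s within {c..<b})"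
      by (auto intro!: derivative_eq_intros)
    from DERIV_minus[OF DERIV_mult[OF this d[rule_format, OF s]]]
    show "(?\<chi> has_real_derivative - (exp (C * s) * (C * \<phi> s + \<phi>' s))) (at s within {c..<b})"
      by (simp add: algebra_simps)
  qed
  have le: "exp (C * t) * \<phi> t \<le> exp (C * s) * \<phi> s" if "t \<le> s" "s < b" for s
  proof -
    have sub: "{t..s} \<subseteq> {c..<b}" using t that by auto
    have np: "\<forall>u\<in>{t..s}. - (exp (C * u) * (C * \<phi> u + \<phi>' u)) \<le> 0"
    proof
      fix u assume "u \<in> {t..s}"
      then have u: "u \<in> {c..<b}" using sub by auto
      have "- \<phi>' u \<le> C * \<phi> u" using bnd u abs_le_D2 by blast
      then have "0 \<le> C * \<phi> u + \<phi>' u" by simp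
      then show "- (exp (C * u) * (C * \<phi> u + \<phi>' u)) \<le> 0" by simp
    qed
    have "?\<chi> s \<le> ?\<chi> t" by (rule deriv_nonpos_mono[OF that(1) sub dchi np])
    then show ?thesis by simp
  qed
  have tl: "((\<lambda>s. exp (C * s) * \<phi> s) \<longlongrightarrow> exp (C * b) * 0) (at_left b)"
    by (intro tendsto_intros lim)
  have ev: "eventually (\<lambda>s. exp (C * t) * \<phi> t \<le> exp (C * s) * \<phi> s) (at_left b)"
  proof -
    have "eventually (\<lambda>s. s \<in> {t<..<b}) (at_left b)"
      using t by (intro eventually_at_left_real) auto
    then show ?thesis by eventually_elim (use le in auto)
  qed
  have "exp (C * t) * \<phi> t \<le> exp (C * b) * 0"
    by (rule tendsto_lowerbound[OF tl ev]) (use t in \<open>simp add: trivial_limit_at_left_real\<close>)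
  then have "\<phi> t \<le> 0" by (simp add: mult_le_0_iff)
  then show "\<phi> t = 0" using nn t by force
qed

lemma clamp_real_in: "(a::real) \<le> b \<Longrightarrow> clamp a b t \<in> {a..b}"
  using clamp_in_interval[of a b t] by (simp add: box_real(2))

lemma clamp_real_cancel: "(t::real) \<in> {a..b} \<Longrightarrow> clamp a b t = t"
  using clamp_cancel_cbox[of t a b] by (simp add: box_real(2))

lemma int_diff_bound:
  fixes g :: "real \<Rightarrow> real \<times> real"
  assumes cg: "continuous_on {a..b} g" and c: "c \<in> {a..b}" and t0: "t0 \<in> {a..b}"
    and M: "\<And>s. s \<in> {a..b} \<Longrightarrow> norm (g s) \<le> M"
  shows "norm (integral {a..c} g - integral {a..t0} g) \<le> M * \<bar>c - t0\<bar>"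
proof (cases "c \<le> t0")
  case True
  have "integral {a..c} g + integral {c..t0} g = integral {a..t0} g"
    by (rule Henstock_Kurzweil_Integration.integral_combine) (use c t0 True in \<open>auto intro!: integrable_continuous_real continuous_on_subset[OF cg]\<close>)
  then have e: "integral {a..c} g - integral {a..t0} g = - integral {c..t0} g"
    by (metis add_diff_cancel_left' minus_diff_eq)
  have "norm (integral {c..t0} g) \<le> M * (t0 - c)"
    by (rule integral_bound) (use c t0 True M in \<open>auto intro!: continuous_on_subset[OF cg]\<close>)
  then show ?thesis using e True by simp
next
  case False
  have "integral {a..t0} g + integral {t0..c} g = integral {a..c} g"
    by (rule Henstock_Kurzweil_Integration.integral_combine) (use c t0 False in \<open>auto intro!: integrable_continuous_real continuous_on_subset[OF cg]\<close>)
  then have e: "integral {a..c} g - integral {a..t0} g = integral {t0..c} g"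
    by (metis add_diff_cancel_left')
  have "norm (integral {t0..c} g) \<le> M * (c - t0)"
    by (rule integral_bound) (use c t0 False M in \<open>auto intro!: continuous_on_subset[OF cg]\<close>)
  then show ?thesis using e False by simp
qed

lemma ode_exists:
  fixes F :: "real \<times> real \<Rightarrow> real \<times> real"
  assumes lip: "\<And>x y. norm (F x - F y) \<le> L * norm (x - y)" and L: "0 \<le> L"
    and h: "0 < h" "h * L < 1"
  shows "\<exists>z. z t0 = z0 \<and> (\<forall>t\<in>{t0-h..t0+h}. (z has_vector_derivative F (z t)) (at t within {t0-h..t0+h}))"
proof -
  define a where "a = t0 - h"
  define b where "b = t0 + h"
  have ab: "a \<le> b" and t0ab: "t0 \<in> {a..b}" using h by (auto simp: a_def b_def)
  have cF: "continuous_on UNIV F"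
    by (rule lipschitz_on_continuous_on[of L]) (auto simp: lipschitz_on_def L dist_norm lip)
  have cFx: "continuous_on S (\<lambda>s. F (apply_bcontfun x s))" for x :: "real \<Rightarrow>\<^sub>C (real \<times> real)" and S
    by (rule continuous_on_compose2[OF cF]) auto
  define P where "P x t = z0 + integral {a..t} (\<lambda>s. F (apply_bcontfun x s)) - integral {a..t0} (\<lambda>s. F (apply_bcontfun x s))"
    for x :: "real \<Rightarrow>\<^sub>C (real \<times> real)" and t
  have cP: "continuous_on {a..b} (P x)" for x
    unfolding P_def
    by (intro continuous_intros indefinite_integral_continuous_1 integrable_continuous_real cFx)
  have mem: "ext_cont (P x) a b \<in> bcontfun" for x
  proof -
    have c1: "continuous_on UNIV (ext_cont (P x) a b)"
      using continuous_on_ext_cont[of a b "P x" UNIV] cP[of x] by (simp add: box_real(2))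
    have "range (ext_cont (P x) a b) \<subseteq> P x ` {a..b}"
      using clamp_real_in[OF ab] by (auto simp: ext_cont_def)
    moreover have "bounded (P x ` {a..b})"
      by (rule compact_imp_bounded[OF compact_continuous_image[OF cP compact_Icc]])
    ultimately have "bounded (range (ext_cont (P x) a b))" by (rule bounded_subset[rotated])
    then show ?thesis using c1 by (simp add: bcontfun_def)
  qed
  define \<Phi> where "\<Phi> x = Bcontfun (ext_cont (P x) a b)" for x
  have \<Phi>app: "apply_bcontfun (\<Phi> x) t = P x (clamp a b t)" for x t
    using Bcontfun_inverse[OF mem[of x]] by (simp add: \<Phi>_def ext_cont_def)
  have contr: "dist (\<Phi> x) (\<Phi> y) \<le> (L * h) * dist x y" for x y
  proof (rule dist_bound)
    fix t
    define c where "c = clamp a b t"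
    have c: "c \<in> {a..b}" using clamp_real_in[OF ab] c_def by auto
    have ix: "(\<lambda>s. F (apply_bcontfun x s)) integrable_on {a..u}" for u
      by (intro integrable_continuous_real cFx)
    have iy: "(\<lambda>s. F (apply_bcontfun y s)) integrable_on {a..u}" for u
      by (intro integrable_continuous_real cFx)
    have "P x c - P y c = integral {a..c} (\<lambda>s. F (apply_bcontfun x s) - F (apply_bcontfun y s))
         - integral {a..t0} (\<lambda>s. F (apply_bcontfun x s) - F (apply_bcontfun y s))"
      unfolding P_def integral_diff[OF ix iy] by (simp add: algebra_simps)
    also have "norm \<dots> \<le> (L * dist x y) * \<bar>c - t0\<bar>"
    proof (rule int_diff_bound[OF _ c t0ab])
      show "continuous_on {a..b} (\<lambda>s. F (apply_bcontfun x s) - F (apply_bcontfun y s))"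
        by (intro continuous_intros cFx)
      fix s
      have "norm (F (apply_bcontfun x s) - F (apply_bcontfun y s)) \<le> L * norm (apply_bcontfun x s - apply_bcontfun y s)"
        by (rule lip)
      also have "\<dots> \<le> L * dist x y"
        using dist_bounded[of x s y] L by (simp add: dist_norm mult_left_mono)
      finally show "norm (F (apply_bcontfun x s) - F (apply_bcontfun y s)) \<le> L * dist x y" .
    qed
    also have "\<dots> \<le> (L * dist x y) * h"
      using c L by (intro mult_left_mono) (auto simp: a_def b_def)
    finally show "dist (apply_bcontfun (\<Phi> x) t) (apply_bcontfun (\<Phi> y) t) \<le> (L * h) * dist x y"
      by (simp add: \<Phi>app c_def dist_norm algebra_simps)
  qed
  obtain x where fx: "\<Phi> x = x"
    using banach_fix_type[of "L * h" \<Phi>] contr h L by (auto simp: mult.commute)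
  define z where "z = apply_bcontfun x"
  have zP: "z t = P x t" if "t \<in> {a..b}" for t
    using \<Phi>app[of x t] fx clamp_real_cancel[OF that] by (simp add: z_def)
  have "z t0 = z0" using zP[OF t0ab] by (simp add: P_def)
  moreover have "(z has_vector_derivative F (z t)) (at t within {a..b})" if t: "t \<in> {a..b}" for t
  proof -
    have "((\<lambda>u. integral {a..u} (\<lambda>s. F (apply_bcontfun x s))) has_vector_derivative F (apply_bcontfun x t)) (at t within {a..b})"
      by (rule integral_has_vector_derivative[OF cFx t])
    then have "(P x has_vector_derivative F (z t)) (at t within {a..b})"
      unfolding P_def z_def by (auto intro!: derivative_eq_intros)
    then show ?thesis
      using has_vector_derivative_transform[OF t, of z "P x"] zP by auto
  qed
  ultimately show ?thesis unfolding a_def b_def by blast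
qed

lemma two_sol_phi:
  fixes K :: "real set" and q1 p1 q2 p2 f g :: "real \<Rightarrow> real"
  assumes L: "0 \<le> L"
    and Lf: "\<forall>t\<in>K. \<bar>f (p1 t) - f (p2 t)\<bar> \<le> L * \<bar>p1 t - p2 t\<bar>"
    and Lg: "\<forall>t\<in>K. \<bar>g (q1 t) - g (q2 t)\<bar> \<le> L * \<bar>q1 t - q2 t\<bar>"
    and d1q: "\<forall>t\<in>K. (q1 has_real_derivative f (p1 t)) (at t within K)"
    and d1p: "\<forall>t\<in>K. (p1 has_real_derivative g (q1 t)) (at t within K)"
    and d2q: "\<forall>t\<in>K. (q2 has_real_derivative f (p2 t)) (at t within K)"
    and d2p: "\<forall>t\<in>K. (p2 has_real_derivative g (q2 t)) (at t within K)"
  shows "\<forall>t\<in>K. ((\<lambda>t. (q1 t - q2 t)^2 + (p1 t - p2 t)^2) has_real_derivative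
            (2 * (q1 t - q2 t) * (f (p1 t) - f (p2 t)) + 2 * (p1 t - p2 t) * (g (q1 t) - g (q2 t)))) (at t within K)"
    and "\<forall>t\<in>K. \<bar>2 * (q1 t - q2 t) * (f (p1 t) - f (p2 t)) + 2 * (p1 t - p2 t) * (g (q1 t) - g (q2 t))\<bar>
            \<le> (2 * L) * ((q1 t - q2 t)^2 + (p1 t - p2 t)^2)"
proof -
  show "\<forall>t\<in>K. ((\<lambda>t. (q1 t - q2 t)^2 + (p1 t - p2 t)^2) has_real_derivative
            (2 * (q1 t - q2 t) * (f (p1 t) - f (p2 t)) + 2 * (p1 t - p2 t) * (g (q1 t) - g (q2 t)))) (at t within K)"
  proof
    fix t assume t: "t \<in> K"
    show "((\<lambda>t. (q1 t - q2 t)^2 + (p1 t - p2 t)^2) has_real_derivative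
            (2 * (q1 t - q2 t) * (f (p1 t) - f (p2 t)) + 2 * (p1 t - p2 t) * (g (q1 t) - g (q2 t)))) (at t within K)"
      using d1q d1p d2q d2p t
      by (auto intro!: derivative_eq_intros simp: algebra_simps)
  qed
  show "\<forall>t\<in>K. \<bar>2 * (q1 t - q2 t) * (f (p1 t) - f (p2 t)) + 2 * (p1 t - p2 t) * (g (q1 t) - g (q2 t))\<bar>
            \<le> (2 * L) * ((q1 t - q2 t)^2 + (p1 t - p2 t)^2)"
  proof
    fix t assume t: "t \<in> K"
    define a where "a = q1 t - q2 t"
    define b where "b = p1 t - p2 t"
    define u where "u = f (p1 t) - f (p2 t)"
    define v where "v = g (q1 t) - g (q2 t)"
    have u: "\<bar>u\<bar> \<le> L * \<bar>b\<bar>" using Lf t by (simp add: u_def b_def)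
    have v: "\<bar>v\<bar> \<le> L * \<bar>a\<bar>" using Lg t by (simp add: v_def a_def)
    have "\<bar>2 * a * u + 2 * b * v\<bar> \<le> 2 * \<bar>a\<bar> * \<bar>u\<bar> + 2 * \<bar>b\<bar> * \<bar>v\<bar>"
      by (simp add: abs_mult abs_triangle_ineq[THEN order_trans])
    also have "\<dots> \<le> 2 * \<bar>a\<bar> * (L * \<bar>b\<bar>) + 2 * \<bar>b\<bar> * (L * \<bar>a\<bar>)"
      by (intro add_mono mult_left_mono u v) auto
    also have "\<dots> = 2 * L * (2 * \<bar>a\<bar> * \<bar>b\<bar>)" by (simp add: algebra_simps)
    also have "\<dots> \<le> 2 * L * (a^2 + b^2)"
    proof -
      have "0 \<le> (\<bar>a\<bar> - \<bar>b\<bar>)^2" by simp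
      then have "2 * \<bar>a\<bar> * \<bar>b\<bar> \<le> a^2 + b^2" by (simp add: power2_diff power2_abs)
      then show ?thesis using L by (intro mult_left_mono) auto
    qed
    finally show "\<bar>2 * (q1 t - q2 t) * (f (p1 t) - f (p2 t)) + 2 * (p1 t - p2 t) * (g (q1 t) - g (q2 t))\<bar>
            \<le> (2 * L) * ((q1 t - q2 t)^2 + (p1 t - p2 t)^2)"
      by (simp add: a_def b_def u_def v_def)
  qed
qed

lemma sum_sq_zero: "(x::real)^2 + y^2 = 0 \<Longrightarrow> x = 0 \<and> y = 0"
  by (metis add_nonneg_eq_0_iff zero_le_power2 power_eq_0_iff zero_neq_numeral)

lemma sol_agree_interval:
  fixes K :: "real set" and q1 p1 q2 p2 f g :: "real \<Rightarrow> real"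
  assumes K: "is_interval K" "t0 \<in> K" and ag: "q1 t0 = q2 t0" "p1 t0 = p2 t0"
    and L: "0 \<le> L"
    and Lf: "\<forall>t\<in>K. \<bar>f (p1 t) - f (p2 t)\<bar> \<le> L * \<bar>p1 t - p2 t\<bar>"
    and Lg: "\<forall>t\<in>K. \<bar>g (q1 t) - g (q2 t)\<bar> \<le> L * \<bar>q1 t - q2 t\<bar>"
    and d1q: "\<forall>t\<in>K. (q1 has_real_derivative f (p1 t)) (at t within K)"
    and d1p: "\<forall>t\<in>K. (p1 has_real_derivative g (q1 t)) (at t within K)"
    and d2q: "\<forall>t\<in>K. (q2 has_real_derivative f (p2 t)) (at t within K)"
    and d2p: "\<forall>t\<in>K. (p2 has_real_derivative g (q2 t)) (at t within K)"
  shows "\<forall>t\<in>K. q1 t = q2 t \<and> p1 t = p2 t"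
proof -
  note ph = two_sol_phi[OF L Lf Lg d1q d1p d2q d2p]
  have "\<forall>t\<in>K. (q1 t - q2 t)^2 + (p1 t - p2 t)^2 = 0"
    by (rule gronwall_zero[OF K(1,2) _ ph(1) ph(2)]) (use ag in auto)
  then show ?thesis using sum_sq_zero by fastforce
qed

lemma sol_agree_left:
  fixes q1 p1 q2 p2 f g :: "real \<Rightarrow> real"
  assumes L: "0 \<le> L"
    and Lf: "\<forall>t\<in>{c..<b}. \<bar>f (p1 t) - f (p2 t)\<bar> \<le> L * \<bar>p1 t - p2 t\<bar>"
    and Lg: "\<forall>t\<in>{c..<b}. \<bar>g (q1 t) - g (q2 t)\<bar> \<le> L * \<bar>q1 t - q2 t\<bar>"
    and d1q: "\<forall>t\<in>{c..<b}. (q1 has_real_derivative f (p1 t)) (at t within {c..<b})"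
    and d1p: "\<forall>t\<in>{c..<b}. (p1 has_real_derivative g (q1 t)) (at t within {c..<b})"
    and d2q: "\<forall>t\<in>{c..<b}. (q2 has_real_derivative f (p2 t)) (at t within {c..<b})"
    and d2p: "\<forall>t\<in>{c..<b}. (p2 has_real_derivative g (q2 t)) (at t within {c..<b})"
    and lq: "((\<lambda>t. q1 t - q2 t) \<longlongrightarrow> 0) (at_left b)"
    and lp: "((\<lambda>t. p1 t - p2 t) \<longlongrightarrow> 0) (at_left b)"
  shows "\<forall>t\<in>{c..<b}. q1 t = q2 t \<and> p1 t = p2 t"
proof -
  note ph = two_sol_phi[OF L Lf Lg d1q d1p d2q d2p]
  have lim: "((\<lambda>t. (q1 t - q2 t)^2 + (p1 t - p2 t)^2) \<longlongrightarrow> 0) (at_left b)"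
    using tendsto_add[OF tendsto_power[OF lq, of 2] tendsto_power[OF lp, of 2]] by simp
  have "\<forall>t\<in>{c..<b}. (q1 t - q2 t)^2 + (p1 t - p2 t)^2 = 0"
    by (rule gronwall_left_limit[OF ph(1) ph(2) _ lim]) auto
  then show ?thesis using sum_sq_zero by fastforce
qed

lemma deriv_bound_lip:
  fixes f f' :: "real \<Rightarrow> real"
  assumes K: "is_interval K" and d: "\<forall>x\<in>K. (f has_real_derivative f' x) (at x within K)"
    and B: "\<forall>x\<in>K. \<bar>f' x\<bar> \<le> B" and x: "x \<in> K" and y: "y \<in> K"
  shows "\<bar>f y - f x\<bar> \<le> B * \<bar>y - x\<bar>"
proof -
  have main: "\<bar>f v - f u\<bar> \<le> B * (v - u)" if uv: "u \<le> v" "u \<in> K" "v \<in> K" for u v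
  proof -
    have sub: "{u..v} \<subseteq> K" using mem_is_interval_1_I[OF K uv(2) uv(3)] by auto
    have d1: "\<forall>s\<in>K. ((\<lambda>s. f s - B * s) has_real_derivative (f' s - B)) (at s within K)"
      using d by (auto intro!: derivative_eq_intros)
    have d2: "\<forall>s\<in>K. ((\<lambda>s. - f s - B * s) has_real_derivative (- f' s - B)) (at s within K)"
      using d by (auto intro!: derivative_eq_intros)
    have n1: "\<forall>s\<in>{u..v}. f' s - B \<le> 0" using B sub by (force dest: abs_le_D1)
    have n2: "\<forall>s\<in>{u..v}. - f' s - B \<le> 0" using B sub by (force dest: abs_le_D2)
    have "f v - B * v \<le> f u - B * u" by (rule deriv_nonpos_mono[OF uv(1) sub d1 n1])
    moreover have "- f v - B * v \<le> - f u - B * u" by (rule deriv_nonpos_mono[OF uv(1) sub d2 n2])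
    ultimately show ?thesis by (simp add: algebra_simps abs_le_iff)
  qed
  show ?thesis
  proof (cases "x \<le> y")
    case True then show ?thesis using main[OF True x y] by simp
  next
    case False then show ?thesis using main[of y x] x y by (simp add: abs_minus_commute)
  qed
qed

lemma C_inf_local_lip:
  fixes U :: "real set" and f :: "real \<Rightarrow> real"
  assumes U: "open U" and f: "C_inf U f" and x0: "x0 \<in> U"
  obtains r L where "0 < r" "cball x0 r \<subseteq> U" "0 \<le> L"
    "\<forall>x\<in>cball x0 r. \<forall>y\<in>cball x0 r. \<bar>f x - f y\<bar> \<le> L * \<bar>x - y\<bar>"
proof -
  obtain r where r: "0 < r" "cball x0 r \<subseteq> U" using open_contains_cball U x0 by blast
  have cd: "continuous_on (cball x0 r) (Dv U f)" using Dv(3)[OF Dv(2)[OF f]] r(2) continuous_on_subset by blast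
  have "bounded (Dv U f ` cball x0 r)" by (rule compact_imp_bounded[OF compact_continuous_image[OF cd compact_cball]])
  then obtain B where B: "\<forall>x\<in>cball x0 r. \<bar>Dv U f x\<bar> \<le> B" by (auto simp: bounded_iff)
  have B0: "0 \<le> B" using B r(1) by (metis abs_ge_zero centre_in_cball less_imp_le order_trans)
  have d: "\<forall>x\<in>cball x0 r. (f has_real_derivative Dv U f x) (at x within cball x0 r)"
    using C_inf_open_deriv[OF U f] r(2) by (auto intro: has_field_derivative_at_within)
  have "\<forall>x\<in>cball x0 r. \<forall>y\<in>cball x0 r. \<bar>f x - f y\<bar> \<le> B * \<bar>x - y\<bar>"
    using deriv_bound_lip[OF is_interval_cball_1 d B] by blast
  then show ?thesis using that r B0 by blast
qed

lemma C_inf_local_bound: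
  fixes U :: "real set" and f :: "real \<Rightarrow> real"
  assumes f: "C_inf U f" and sub: "cball x0 r \<subseteq> U"
  obtains B where "0 \<le> B" "\<forall>x\<in>cball x0 r. \<bar>f x\<bar> \<le> B"
proof -
  have cd: "continuous_on (cball x0 r) f" using Dv(3)[OF f] sub continuous_on_subset by blast
  have "bounded (f ` cball x0 r)" by (rule compact_imp_bounded[OF compact_continuous_image[OF cd compact_cball]])
  then obtain B where B: "\<forall>x\<in>cball x0 r. \<bar>f x\<bar> \<le> B" by (auto simp: bounded_iff)
  then have "\<forall>x\<in>cball x0 r. \<bar>f x\<bar> \<le> max B 0" by auto
  then show ?thesis using that[of "max B 0"] by auto
qed

lemma gap_pos:
  assumes A1: "\<forall>k\<in>U. k \<noteq> pstar \<longrightarrow> bloch_E V n k \<noteq> bloch_E V (Suc n) k"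
    and A2: "\<exists>M>0. \<forall>k\<in>closure U. \<forall>m. 1 \<le> m \<and> m \<noteq> n \<and> m \<noteq> Suc n \<longrightarrow>
                \<bar>bloch_E V m k - bloch_E V (Suc n) k\<bar> \<ge> M \<and> \<bar>bloch_E V n k - bloch_E V m k\<bar> \<ge> M"
    and n: "1 \<le> n" and k: "k \<in> U" "k \<noteq> pstar"
  shows "bloch_gap V (Suc n) k > 0"
proof -
  obtain M where M: "M > 0" "\<forall>k\<in>closure U. \<forall>m. 1 \<le> m \<and> m \<noteq> n \<and> m \<noteq> Suc n \<longrightarrow>
                \<bar>bloch_E V m k - bloch_E V (Suc n) k\<bar> \<ge> M \<and> \<bar>bloch_E V n k - bloch_E V m k\<bar> \<ge> M"
    using A2 by blast
  have kc: "k \<in> closure U" using k closure_subset by blast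
  define c where "c = min M \<bar>bloch_E V (Suc n) k - bloch_E V n k\<bar>"
  have c: "c > 0" using M(1) A1 k by (auto simp: c_def)
  let ?S = "{\<bar>bloch_E V (Suc n) k - bloch_E V m' k\<bar> | m'. 1 \<le> m' \<and> m' \<noteq> Suc n}"
  have ne: "?S \<noteq> {}" using n by auto
  have "c \<le> s" if "s \<in> ?S" for s
  proof -
    obtain m' where m': "s = \<bar>bloch_E V (Suc n) k - bloch_E V m' k\<bar>" "1 \<le> m'" "m' \<noteq> Suc n" using \<open>s \<in> ?S\<close> by blast
    show ?thesis
    proof (cases "m' = n")
      case True then show ?thesis using m' by (simp add: c_def)
    next
      case False
      then have "\<bar>bloch_E V m' k - bloch_E V (Suc n) k\<bar> \<ge> M" using M(2) kc m' by blast
      then show ?thesis using m' by (simp add: c_def abs_minus_commute)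
    qed
  qed
  then have "c \<le> Inf ?S" by (intro cInf_greatest ne) auto
  then show ?thesis using c by (simp add: bloch_gap_def)
qed

lemma vd_fst:
  assumes "(z has_vector_derivative (a, b)) F"
  shows "((\<lambda>t. fst (z t)) has_real_derivative a) F"
proof -
  have "((\<lambda>t. fst (z t)) has_derivative (\<lambda>x. fst (x *\<^sub>R (a, b)))) F"
    using has_derivative_fst[OF assms[unfolded has_vector_derivative_def]] .
  then show ?thesis by (simp add: has_real_derivative_iff_has_vector_derivative has_vector_derivative_def)
qed

lemma vd_snd:
  assumes "(z has_vector_derivative (a, b)) F"
  shows "((\<lambda>t. snd (z t)) has_real_derivative b) F"
proof -
  have "((\<lambda>t. snd (z t)) has_derivative (\<lambda>x. snd (x *\<^sub>R (a, b)))) F"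
    using has_derivative_snd[OF assms[unfolded has_vector_derivative_def]] .
  then show ?thesis by (simp add: has_real_derivative_iff_has_vector_derivative has_vector_derivative_def)
qed

lemma incr_from_deriv:
  fixes f f' :: "real \<Rightarrow> real"
  assumes K: "is_interval K" and d: "\<forall>x\<in>K. (f has_real_derivative f' x) (at x within K)"
    and pos: "\<forall>x\<in>K. 0 < f' x" and a: "a \<in> K" and b: "b \<in> K" and ab: "a < b"
  shows "f a < f b"
proof -
  have sub: "{a..b} \<subseteq> K" using mem_is_interval_1_I[OF K a b] by auto
  have cont: "continuous_on {a..b} f"
  proof -
    have "\<forall>x\<in>{a..b}. continuous (at x within K) f"
      using d sub by (meson DERIV_continuous subsetD)
    then show ?thesis
      unfolding continuous_on_eq_continuous_within using continuous_within_subset sub by blast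
  qed
  show ?thesis
  proof (rule DERIV_pos_imp_increasing_open[OF ab _ cont])
    fix x assume x: "a < x" "x < b"
    have "{a<..<b} \<subseteq> K" using sub by auto
    then have "x \<in> interior K"
      using interior_maximal[OF _ open_greaterThanLessThan, of a b K] x by auto
    then have "at x within K = at x" by (rule at_within_interior)
    moreover have "x \<in> K" using x sub by auto
    ultimately show "\<exists>y. (f has_real_derivative y) (at x) \<and> 0 < y" using d pos by metis
  qed
qed

lemma sol_unique_clopen:
  fixes I :: "real set" and q1 p1 q2 p2 ef wf :: "real \<Rightarrow> real"
  assumes I: "is_interval I" "t0 \<in> I" and ag: "q1 t0 = q2 t0" "p1 t0 = p2 t0"
    and r: "0 < r" and L: "0 \<le> L"
    and half: "\<forall>t\<in>I. \<bar>q2 t - qc\<bar> \<le> r/2 \<and> \<bar>p2 t - pc\<bar> \<le> r/2"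
    and lipe: "\<forall>x\<in>cball pc r. \<forall>y\<in>cball pc r. \<bar>ef x - ef y\<bar> \<le> L * \<bar>x - y\<bar>"
    and lipw: "\<forall>x\<in>cball qc r. \<forall>y\<in>cball qc r. \<bar>wf x - wf y\<bar> \<le> L * \<bar>x - y\<bar>"
    and d1q: "\<forall>t\<in>I. (q1 has_real_derivative ef (p1 t)) (at t within I)"
    and d1p: "\<forall>t\<in>I. (p1 has_real_derivative wf (q1 t)) (at t within I)"
    and d2q: "\<forall>t\<in>I. (q2 has_real_derivative ef (p2 t)) (at t within I)"
    and d2p: "\<forall>t\<in>I. (p2 has_real_derivative wf (q2 t)) (at t within I)"
  shows "\<forall>t\<in>I. q1 t = q2 t \<and> p1 t = p2 t"
proof -
  define A where "A = {t\<in>I. (\<lambda>t. (q1 t - q2 t, p1 t - p2 t)) t = (0, 0)}"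
  have cq1: "continuous_on I q1" unfolding continuous_on_eq_continuous_within using d1q DERIV_continuous by blast
  have cp1: "continuous_on I p1" unfolding continuous_on_eq_continuous_within using d1p DERIV_continuous by blast
  have cq2: "continuous_on I q2" unfolding continuous_on_eq_continuous_within using d2q DERIV_continuous by blast
  have cp2: "continuous_on I p2" unfolding continuous_on_eq_continuous_within using d2p DERIV_continuous by blast
  have clo: "closedin (top_of_set I) A"
    unfolding A_def by (rule continuous_closedin_preimage_constant) (intro continuous_intros cq1 cp1 cq2 cp2)
  have opn: "openin (top_of_set I) A"
    unfolding openin_euclidean_subtopology_iff
  proof (intro conjI ballI)
    show "A \<subseteq> I" by (auto simp: A_def)
  next
    fix s assume sA: "s \<in> A"
    then have sI: "s \<in> I" and eq: "q1 s = q2 s" "p1 s = p2 s" by (auto simp: A_def)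
    obtain e1 where e1: "e1 > 0" "\<forall>t\<in>I. dist t s < e1 \<longrightarrow> dist (q1 t) (q1 s) < r/2"
      using cq1 sI r unfolding continuous_on_iff by (metis half_gt_zero)
    obtain e2 where e2: "e2 > 0" "\<forall>t\<in>I. dist t s < e2 \<longrightarrow> dist (p1 t) (p1 s) < r/2"
      using cp1 sI r unfolding continuous_on_iff by (metis half_gt_zero)
    define e where "e = min e1 e2"
    define K where "K = I \<inter> ball s e"
    have K: "is_interval K" unfolding K_def by (intro is_interval_Int I(1) is_interval_ball_real)
    have sK: "s \<in> K" using sI e1 e2 by (auto simp: K_def e_def)
    have KI: "K \<subseteq> I" by (auto simp: K_def)
    have inq1: "q1 t \<in> cball qc r" if "t \<in> K" for t
    proof -
      have "t \<in> I" "dist t s < e1" using that by (auto simp: K_def e_def dist_commute)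
      then have "\<bar>q1 t - q1 s\<bar> < r/2" using e1 by (auto simp: dist_real_def)
      moreover have "\<bar>q2 s - qc\<bar> \<le> r/2" using half sI by auto
      ultimately show ?thesis using eq unfolding mem_cball dist_real_def abs_le_iff abs_less_iff by linarith
    qed
    have inp1: "p1 t \<in> cball pc r" if "t \<in> K" for t
    proof -
      have "t \<in> I" "dist t s < e2" using that by (auto simp: K_def e_def dist_commute)
      then have "\<bar>p1 t - p1 s\<bar> < r/2" using e2 by (auto simp: dist_real_def)
      moreover have "\<bar>p2 s - pc\<bar> \<le> r/2" using half sI by auto
      ultimately show ?thesis using eq unfolding mem_cball dist_real_def abs_le_iff abs_less_iff by linarith
    qed
    have inq2: "q2 t \<in> cball qc r" if "t \<in> K" for t
    proof -
      have "\<bar>q2 t - qc\<bar> \<le> r/2" using half KI that by auto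
      then show ?thesis using r unfolding mem_cball dist_real_def abs_le_iff by linarith
    qed
    have inp2: "p2 t \<in> cball pc r" if "t \<in> K" for t
    proof -
      have "\<bar>p2 t - pc\<bar> \<le> r/2" using half KI that by auto
      then show ?thesis using r unfolding mem_cball dist_real_def abs_le_iff by linarith
    qed
    have "\<forall>t\<in>K. q1 t = q2 t \<and> p1 t = p2 t"
    proof (rule sol_agree_interval[where ?q1.0=q1 and ?q2.0=q2 and ?p1.0=p1 and ?p2.0=p2 and f=ef and g=wf, OF K sK eq L])
      show "\<forall>t\<in>K. \<bar>ef (p1 t) - ef (p2 t)\<bar> \<le> L * \<bar>p1 t - p2 t\<bar>" using lipe inp1 inp2 by blast
      show "\<forall>t\<in>K. \<bar>wf (q1 t) - wf (q2 t)\<bar> \<le> L * \<bar>q1 t - q2 t\<bar>" using lipw inq1 inq2 by blast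
      show "\<forall>t\<in>K. (q1 has_real_derivative ef (p1 t)) (at t within K)" using d1q KI DERIV_subset by blast
      show "\<forall>t\<in>K. (p1 has_real_derivative wf (q1 t)) (at t within K)" using d1p KI DERIV_subset by blast
      show "\<forall>t\<in>K. (q2 has_real_derivative ef (p2 t)) (at t within K)" using d2q KI DERIV_subset by blast
      show "\<forall>t\<in>K. (p2 has_real_derivative wf (q2 t)) (at t within K)" using d2p KI DERIV_subset by blast
    qed
    then show "\<exists>e>0. \<forall>x'\<in>I. dist x' s < e \<longrightarrow> x' \<in> A"
      using e1 e2 by (intro exI[of _ e]) (auto simp: e_def A_def K_def dist_commute)
  qed
  have "t0 \<in> A" using I ag by (auto simp: A_def)
  then have "A = I" using clo opn is_interval_connected[OF I(1)] unfolding connected_clopen by blast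
  then show ?thesis by (auto simp: A_def)
qed

theorem proposition3p7:
  fixes V W :: "real \<Rightarrow> real"
    and n :: nat
    and U :: "real set"
    and pstar qstar q0 p0 tstar :: real
    and q p :: "real \<Rightarrow> real"
    and Eplus Eminus :: "real \<Rightarrow> real"
  assumes V_smooth: "C_inf UNIV V"
    and V_per: "\<forall>z. V (z + 1) = V z"
    and W_smooth: "C_inf UNIV W"
    and W_bdd: "\<forall>k. bounded (range ((deriv ^^ k) W))"
    and n_pos: "1 \<le> n"
    and U_open: "open U" and pstar_U: "pstar \<in> U"
    and Eplus_def: "Eplus = (\<lambda>k. if k < pstar then bloch_E V n k else bloch_E V (Suc n) k)"
    and Eminus_def: "Eminus = (\<lambda>k. if k < pstar then bloch_E V (Suc n) k else bloch_E V n k)"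
    and A1: "bloch_E V n pstar = bloch_E V (Suc n) pstar"
            "\<forall>k\<in>U. k \<noteq> pstar \<longrightarrow> bloch_E V n k \<noteq> bloch_E V (Suc n) k"
    and A2: "\<exists>M>0. \<forall>k\<in>closure U. \<forall>m. 1 \<le> m \<and> m \<noteq> n \<and> m \<noteq> Suc n \<longrightarrow>
                \<bar>bloch_E V m k - bloch_E V (Suc n) k\<bar> \<ge> M \<and> \<bar>bloch_E V n k - bloch_E V m k\<bar> \<ge> M"
    and A3: "C_inf U Eplus" "C_inf U Eminus"
            "\<exists>chi_plus chi_minus :: real \<times> real \<Rightarrow> complex.
               C_inf (UNIV \<times> U) chi_plus \<and> C_inf (UNIV \<times> U) chi_minus \<and>
               (\<forall>k\<in>U. bloch_eigenfunction V k (Eplus k) (\<lambda>z. chi_plus (z, k)) \<and>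
                       integral {0..1} (\<lambda>z. (cmod (chi_plus (z, k)))\<^sup>2) = 1 \<and>
                       bloch_eigenfunction V k (Eminus k) (\<lambda>z. chi_minus (z, k)) \<and>
                       integral {0..1} (\<lambda>z. (cmod (chi_minus (z, k)))\<^sup>2) = 1)"
    and A4: "deriv Eplus pstar > 0" "deriv Eminus pstar < 0"
    and gap0: "bloch_gap V n p0 > 0"
    and tstar_pos: "tstar > 0"
    and traj_smooth: "C_inf {0..<tstar} (\<lambda>t. (q t, p t))"
    and traj_sol: "flow_sol (bloch_E V n) W {0..<tstar} q p"
    and traj_init: "q 0 = q0" "p 0 = p0"
    and traj_unique: "\<forall>q' p'. C_inf {0..<tstar} (\<lambda>t. (q' t, p' t)) \<and>
                        flow_sol (bloch_E V n) W {0..<tstar} q' p' \<and> q' 0 = q0 \<and> p' 0 = p0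
                        \<longrightarrow> (\<forall>t\<in>{0..<tstar}. q' t = q t \<and> p' t = p t)"
    and traj_gap: "\<forall>t\<in>{0..<tstar}. bloch_gap V n (p t) > 0"
    and p_lim: "(p \<longlongrightarrow> pstar) (at_left tstar)"
    and q_lim: "(q \<longlongrightarrow> qstar) (at_left tstar)"
    and force: "- deriv W qstar > 0"
  shows "\<exists>\<delta>0>0. \<forall>\<delta>. 0 < \<delta> \<and> \<delta> < \<delta>0 \<and> \<delta> < tstar \<longrightarrow>
    (\<exists>qp pp :: real \<Rightarrow> real.
       \<comment> \<open>(i) existence, uniqueness, agreement with (q,p)\<close>
       C_inf {tstar - \<delta>..tstar + \<delta>} (\<lambda>t. (qp t, pp t)) \<and>
       flow_sol Eplus W {tstar - \<delta>..tstar + \<delta>} qp pp \<and>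
       (\<forall>t\<in>{tstar - \<delta>..tstar + \<delta>}. pp t \<in> U) \<and>
       qp tstar = qstar \<and> pp tstar = pstar \<and>
       (\<forall>q' p'. C_inf {tstar - \<delta>..tstar + \<delta>} (\<lambda>t. (q' t, p' t)) \<and>
                flow_sol Eplus W {tstar - \<delta>..tstar + \<delta>} q' p' \<and>
                (\<forall>t\<in>{tstar - \<delta>..tstar + \<delta>}. p' t \<in> U) \<and>
                q' tstar = qstar \<and> p' tstar = pstar
                \<longrightarrow> (\<forall>t\<in>{tstar - \<delta>..tstar + \<delta>}. q' t = qp t \<and> p' t = pp t)) \<and>
       (\<forall>t\<in>{tstar - \<delta>..<tstar}. q t = qp t \<and> p t = pp t) \<and>
       \<comment> \<open>(ii) and (iii)\<close>
       (\<exists>T0 > tstar + \<delta>. \<forall>T. tstar + \<delta> \<le> T \<and> T \<le> T0 \<longrightarrow>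
          (\<exists>qn pn :: real \<Rightarrow> real.
             C_inf {tstar<..T} (\<lambda>t. (qn t, pn t)) \<and>
             flow_sol (bloch_E V (Suc n)) W {tstar<..T} qn pn \<and>
             ((\<lambda>t. (qn t, pn t)) \<longlongrightarrow> (qstar, pstar)) (at_right tstar) \<and>
             (\<forall>t\<in>{tstar<..T}. bloch_gap V (Suc n) (pn t) > 0) \<and>
             (\<forall>t\<in>{tstar<..tstar + \<delta>}. qp t = qn t \<and> pp t = pn t) \<and>
             C_inf {0..T} (\<lambda>t. if t \<le> tstar - \<delta> then (q t, p t)
                               else if t \<le> tstar + \<delta> then (qp t, pp t)
                               else (qn t, pn t)))))"
proof -
  define e where "e = Dv U Eplus"
  have dE: "\<And>k. k \<in> U \<Longrightarrow> (Eplus has_real_derivative e k) (at k)"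
    unfolding e_def using C_inf_open_deriv[OF U_open A3(1)] by blast
  have ce: "C_inf U e" unfolding e_def using Dv(2)[OF A3(1)] .
  define w where "w = Dv UNIV W"
  have dW: "\<And>x. (W has_real_derivative w x) (at x)"
    unfolding w_def using C_inf_open_deriv[OF open_UNIV W_smooth] by blast
  have dWeq: "\<And>x. deriv W x = w x" using dW DERIV_imp_deriv by blast
  have cw: "C_inf UNIV w" unfolding w_def using Dv(2)[OF W_smooth] .
  have wc: "continuous_on UNIV w" using Dv(3)[OF cw] .
  have wneg: "w qstar < 0" using force dWeq by simp
  obtain \<rho> where \<rho>: "\<rho> > 0" "\<And>x. dist x qstar < \<rho> \<Longrightarrow> w x < 0"
  proof -
    obtain d where d: "d > 0" "\<forall>x'\<in>UNIV. dist x' qstar < d \<longrightarrow> dist (w x') (w qstar) < - w qstar"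
      using wc wneg unfolding continuous_on_iff by (metis UNIV_I neg_0_less_iff_less)
    have "w x < 0" if "dist x qstar < d" for x
      using d that unfolding dist_real_def abs_less_iff by auto
    then show ?thesis using that[of d] d(1) by blast
  qed
  obtain rp Le where rp: "0 < rp" "cball pstar rp \<subseteq> U" "0 \<le> Le"
      "\<forall>x\<in>cball pstar rp. \<forall>y\<in>cball pstar rp. \<bar>e x - e y\<bar> \<le> Le * \<bar>x - y\<bar>"
    by (rule C_inf_local_lip[OF U_open ce pstar_U])
  obtain rq Lw where rq: "0 < rq" "cball qstar rq \<subseteq> UNIV" "0 \<le> Lw"
      "\<forall>x\<in>cball qstar rq. \<forall>y\<in>cball qstar rq. \<bar>w x - w y\<bar> \<le> Lw * \<bar>x - y\<bar>"
    by (rule C_inf_local_lip[OF open_UNIV cw UNIV_I])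
  define r where "r = min rp (min rq (\<rho>/2))"
  have r: "0 < r" "r \<le> rp" "r \<le> rq" "r \<le> \<rho>/2" using rp rq \<rho> by (auto simp: r_def)
  define L where "L = Le + Lw"
  have L0: "0 \<le> L" using rp rq by (simp add: L_def)
  have cbp: "cball pstar r \<subseteq> cball pstar rp" using r by (simp add: subset_cball)
  have cbq: "cball qstar r \<subseteq> cball qstar rq" using r by (simp add: subset_cball)
  have Up: "cball pstar r \<subseteq> U" using cbp rp(2) by blast
  have lipe: "\<forall>x\<in>cball pstar r. \<forall>y\<in>cball pstar r. \<bar>e x - e y\<bar> \<le> L * \<bar>x - y\<bar>"
  proof (intro ballI)
    fix x y assume "x \<in> cball pstar r" "y \<in> cball pstar r"
    then have "\<bar>e x - e y\<bar> \<le> Le * \<bar>x - y\<bar>" using rp(4) cbp by blast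
    also have "\<dots> \<le> L * \<bar>x - y\<bar>" using rq(3) by (intro mult_right_mono) (auto simp: L_def)
    finally show "\<bar>e x - e y\<bar> \<le> L * \<bar>x - y\<bar>" .
  qed
  have lipw: "\<forall>x\<in>cball qstar r. \<forall>y\<in>cball qstar r. \<bar>w x - w y\<bar> \<le> L * \<bar>x - y\<bar>"
  proof (intro ballI)
    fix x y assume "x \<in> cball qstar r" "y \<in> cball qstar r"
    then have "\<bar>w x - w y\<bar> \<le> Lw * \<bar>x - y\<bar>" using rq(4) cbq by blast
    also have "\<dots> \<le> L * \<bar>x - y\<bar>" using rp(3) by (intro mult_right_mono) (auto simp: L_def)
    finally show "\<bar>w x - w y\<bar> \<le> L * \<bar>x - y\<bar>" .
  qed
  have lipw': "\<forall>x\<in>cball qstar r. \<forall>y\<in>cball qstar r. \<bar>(- w x) - (- w y)\<bar> \<le> L * \<bar>x - y\<bar>"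
    using lipw by (simp add: abs_minus_commute)
  have wneg_r: "w x < 0" if "x \<in> cball qstar r" for x
  proof -
    have "dist x qstar \<le> r" using that by (simp add: dist_commute)
    then show ?thesis using \<rho> r by auto
  qed
  obtain Be where Be: "0 \<le> Be" "\<forall>x\<in>cball pstar r. \<bar>e x\<bar> \<le> Be" by (rule C_inf_local_bound[OF ce Up])
  obtain Bw where Bw: "0 \<le> Bw" "\<forall>x\<in>cball qstar r. \<bar>w x\<bar> \<le> Bw" by (rule C_inf_local_bound[OF cw subset_UNIV])
  define B where "B = Be + Bw + 1"
  have B0: "0 < B" using Be Bw by (simp add: B_def)
  define clp where "clp x = max (pstar - r) (min (pstar + r) x)" for x
  define clq where "clq x = max (qstar - r) (min (qstar + r) x)" for x
  have clp_in: "clp x \<in> cball pstar r" for x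
    using r(1) unfolding clp_def mem_cball dist_real_def by (auto simp: abs_le_iff max_def min_def)
  have clq_in: "clq x \<in> cball qstar r" for x
    using r(1) unfolding clq_def mem_cball dist_real_def by (auto simp: abs_le_iff max_def min_def)
  have clp_lip: "\<bar>clp x - clp y\<bar> \<le> \<bar>x - y\<bar>" for x y
    unfolding clp_def by (auto simp: abs_le_iff max_def min_def)
  have clq_lip: "\<bar>clq x - clq y\<bar> \<le> \<bar>x - y\<bar>" for x y
    unfolding clq_def by (auto simp: abs_le_iff max_def min_def)
  have clp_id: "\<bar>x - pstar\<bar> \<le> r \<Longrightarrow> clp x = x" for x
    unfolding clp_def by (auto simp: abs_le_iff max_def min_def)
  have clq_id: "\<bar>x - qstar\<bar> \<le> r \<Longrightarrow> clq x = x" for x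
    unfolding clq_def by (auto simp: abs_le_iff max_def min_def)
  define F where "F z = (e (clp (snd z)), - w (clq (fst z)))" for z :: "real \<times> real"
  have Flip: "norm (F x - F y) \<le> (2 * L) * norm (x - y)" for x y
  proof -
    have "norm (F x - F y) \<le> \<bar>e (clp (snd x)) - e (clp (snd y))\<bar> + \<bar>w (clq (fst x)) - w (clq (fst y))\<bar>"
      using norm_Pair_le[of "e (clp (snd x)) - e (clp (snd y))" "- w (clq (fst x)) - - w (clq (fst y))"]
      by (simp add: F_def abs_minus_commute)
    also have "\<dots> \<le> L * \<bar>clp (snd x) - clp (snd y)\<bar> + L * \<bar>clq (fst x) - clq (fst y)\<bar>"
      using lipe lipw clp_in clq_in by (intro add_mono) auto
    also have "\<dots> \<le> L * \<bar>snd x - snd y\<bar> + L * \<bar>fst x - fst y\<bar>"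
      using clp_lip clq_lip L0 by (intro add_mono mult_left_mono) auto
    also have "\<dots> \<le> L * norm (x - y) + L * norm (x - y)"
    proof -
      have xy: "x - y = (fst x - fst y, snd x - snd y)" by (simp add: prod_eq_iff)
      have "\<bar>snd x - snd y\<bar> \<le> norm (x - y)" using norm_snd_le[where x="fst x - fst y" and y="snd x - snd y"] xy by simp
      moreover have "\<bar>fst x - fst y\<bar> \<le> norm (x - y)" using norm_fst_le[where x="fst x - fst y" and y="snd x - snd y"] xy by simp
      ultimately show ?thesis using L0 by (intro add_mono mult_left_mono) auto
    qed
    finally show ?thesis by simp
  qed
  have Fb1: "\<bar>e (clp v)\<bar> \<le> B" for v using Be(2) clp_in[of v] Bw(1) by (force simp: B_def)
  have Fb2: "\<bar>- w (clq u)\<bar> \<le> B" for u using Bw(2) clq_in[of u] Be(1) by (force simp: B_def)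
  define h where "h = min (r / (2 * B)) (1 / (4 * L + 1))"
  have h0: "0 < h" using r B0 L0 by (simp add: h_def)
  have hL: "h * (2 * L) < 1"
  proof -
    have "h * (2 * L) \<le> (1 / (4 * L + 1)) * (2 * L)" using L0 by (intro mult_right_mono) (auto simp: h_def)
    also have "\<dots> < 1" using L0 by (simp add: field_simps)
    finally show ?thesis .
  qed
  have hB: "B * h \<le> r / 2"
  proof -
    have "B * h \<le> B * (r / (2 * B))" using B0 by (intro mult_left_mono) (auto simp: h_def)
    also have "\<dots> = r / 2" using B0 by (simp add: field_simps)
    finally show ?thesis .
  qed
  obtain z where z0: "z tstar = (qstar, pstar)"
    and zd: "\<forall>t\<in>{tstar-h..tstar+h}. (z has_vector_derivative F (z t)) (at t within {tstar-h..tstar+h})"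
    using ode_exists[of F "2 * L" h tstar "(qstar, pstar)"] Flip L0 h0 hL by auto
  define I where "I = {tstar-h..tstar+h}"
  define qs where "qs t = fst (z t)" for t
  define ps where "ps t = snd (z t)" for t
  have zeq: "z = (\<lambda>t. (qs t, ps t))" by (simp add: qs_def ps_def)
  have Iint: "is_interval I" by (simp add: I_def is_interval_convex_1)
  have tI: "tstar \<in> I" using h0 by (simp add: I_def)
  have qs_star: "qs tstar = qstar" and ps_star: "ps tstar = pstar" using z0 by (auto simp: qs_def ps_def)
  have dqs0: "\<forall>t\<in>I. (qs has_real_derivative e (clp (ps t))) (at t within I)"
    using zd unfolding I_def qs_def ps_def F_def by (auto intro: vd_fst)
  have dps0: "\<forall>t\<in>I. (ps has_real_derivative - w (clq (qs t))) (at t within I)"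
    using zd unfolding I_def qs_def ps_def F_def by (auto intro: vd_snd)
  have qs_close: "\<bar>qs t - qstar\<bar> \<le> r / 2" if t: "t \<in> I" for t
  proof -
    have "\<bar>qs t - qs tstar\<bar> \<le> B * \<bar>t - tstar\<bar>"
      by (rule deriv_bound_lip[OF Iint dqs0 _ tI t]) (use Fb1 in auto)
    also have "\<dots> \<le> B * h" using t B0 by (intro mult_left_mono) (auto simp: I_def)
    finally show ?thesis using hB qs_star by simp
  qed
  have ps_close: "\<bar>ps t - pstar\<bar> \<le> r / 2" if t: "t \<in> I" for t
  proof -
    have "\<bar>ps t - ps tstar\<bar> \<le> B * \<bar>t - tstar\<bar>"
      by (rule deriv_bound_lip[OF Iint dps0 _ tI t]) (use Fb2 in auto)
    also have "\<dots> \<le> B * h" using t B0 by (intro mult_left_mono) (auto simp: I_def)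
    finally show ?thesis using hB ps_star by simp
  qed
  have ps_cb: "ps t \<in> cball pstar r" if "t \<in> I" for t
    using ps_close[OF that] r(1) unfolding mem_cball dist_real_def abs_le_iff by linarith
  have qs_cb: "qs t \<in> cball qstar r" if "t \<in> I" for t
    using qs_close[OF that] r(1) unfolding mem_cball dist_real_def abs_le_iff by linarith
  have clps: "clp (ps t) = ps t" if "t \<in> I" for t
  proof -
    have "\<bar>ps t - pstar\<bar> \<le> r" using ps_close[OF that] r(1) by linarith
    then show ?thesis by (rule clp_id)
  qed
  have clqs: "clq (qs t) = qs t" if "t \<in> I" for t
  proof -
    have "\<bar>qs t - qstar\<bar> \<le> r" using qs_close[OF that] r(1) by linarith
    then show ?thesis by (rule clq_id)
  qed
  have dqs: "\<forall>t\<in>I. (qs has_real_derivative e (ps t)) (at t within I)"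
    using dqs0 clps by simp
  have dps: "\<forall>t\<in>I. (ps has_real_derivative - w (qs t)) (at t within I)"
    using dps0 clqs by simp
  have psU: "\<forall>t\<in>I. ps t \<in> U" using ps_cb Up by blast
  have wqs: "\<forall>t\<in>I. 0 < - w (qs t)" using qs_cb wneg_r by auto
  have Csol: "C_inf I (\<lambda>t. (qs t, ps t))" by (rule sol_C_inf[OF U_open ce cw psU dqs dps])
  have ps_lt: "ps t < pstar" if "t \<in> I" "t < tstar" for t
    using incr_from_deriv[OF Iint dps wqs that(1) tI that(2)] ps_star by simp
  have ps_gt: "pstar < ps t" if "t \<in> I" "tstar < t" for t
    using incr_from_deriv[OF Iint dps wqs tI that(1) that(2)] ps_star by simp
  have tint: "tstar \<in> interior I" using h0 by (simp add: I_def)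
  have atI: "at tstar within I = at tstar" by (rule at_within_interior[OF tint])
  have zcont: "isCont z tstar"
    using zd tI atI unfolding I_def by (metis has_vector_derivative_continuous)
  have qs_lim: "(qs \<longlongrightarrow> qstar) (at_left tstar)"
  proof -
    have "isCont qs tstar" using dqs tI atI by (metis DERIV_isCont)
    then have "(qs \<longlongrightarrow> qstar) (at tstar)" using qs_star by (simp add: isCont_def)
    then show ?thesis by (rule tendsto_mono[OF at_within_le_at])
  qed
  have ps_lim: "(ps \<longlongrightarrow> pstar) (at_left tstar)"
  proof -
    have "isCont ps tstar" using dps tI atI by (metis DERIV_isCont)
    then have "(ps \<longlongrightarrow> pstar) (at tstar)" using ps_star by (simp add: isCont_def)
    then show ?thesis by (rule tendsto_mono[OF at_within_le_at])
  qed
  have tsol: "\<forall>t\<in>{0..<tstar}. (\<exists>D. (bloch_E V n has_real_derivative D) (at (p t)) \<and> (q has_real_derivative D) (at t within {0..<tstar}))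
           \<and> (p has_real_derivative - deriv W (q t)) (at t within {0..<tstar})"
    using traj_sol unfolding flow_sol_def .
  have "eventually (\<lambda>t. dist (q t) qstar < r) (at_left tstar)" using q_lim r(1) tendsto_iff by blast
  then obtain b1 where b1: "b1 < tstar" "\<forall>y>b1. y < tstar \<longrightarrow> dist (q y) qstar < r"
    using eventually_at_left[of "tstar - 1" tstar] by auto
  have "eventually (\<lambda>t. dist (p t) pstar < r) (at_left tstar)" using p_lim r(1) tendsto_iff by blast
  then obtain b2 where b2: "b2 < tstar" "\<forall>y>b2. y < tstar \<longrightarrow> dist (p y) pstar < r"
    using eventually_at_left[of "tstar - 1" tstar] by auto
  define c0 where "c0 = max (max b1 b2) 0"
  have c0: "c0 < tstar" "0 \<le> c0" using b1 b2 tstar_pos by (auto simp: c0_def)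
  define K0 where "K0 = {c0<..<tstar}"
  have K0sub: "K0 \<subseteq> {0..<tstar}" using c0 by (auto simp: K0_def)
  have K0int: "is_interval K0" by (simp add: K0_def is_interval_convex_1)
  have qK0: "q t \<in> cball qstar r" if "t \<in> K0" for t
    using b1 that by (auto simp: K0_def c0_def dist_commute)
  have pK0: "p t \<in> cball pstar r" if "t \<in> K0" for t
    using b2 that by (auto simp: K0_def c0_def dist_commute)
  have pK0': "dist (p t) pstar < r" if "t \<in> K0" for t
    using b2 that by (auto simp: K0_def c0_def)
  have dp0: "\<forall>t\<in>K0. (p has_real_derivative - w (q t)) (at t within K0)"
    using tsol K0sub dWeq by (metis DERIV_subset subsetD)
  have pos0: "\<forall>t\<in>K0. 0 < - w (q t)" using qK0 wneg_r by auto
  have p_lt: "p t < pstar" if t: "t \<in> K0" for t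
  proof -
    define s where "s = (t + tstar) / 2"
    have s: "s \<in> K0" "t < s" using t by (auto simp: K0_def s_def)
    have pts: "p t < p s" by (rule incr_from_deriv[OF K0int dp0 pos0 t s(1) s(2)])
    have "eventually (\<lambda>u. u \<in> {s<..<tstar}) (at_left tstar)"
      using s by (intro eventually_at_left_real) (auto simp: K0_def)
    then have "eventually (\<lambda>u. p s \<le> p u) (at_left tstar)"
    proof (rule eventually_mono)
      fix u assume u: "u \<in> {s<..<tstar}"
      then have "u \<in> K0" using s by (auto simp: K0_def)
      then show "p s \<le> p u" using incr_from_deriv[OF K0int dp0 pos0 s(1)] u by force
    qed
    then have "p s \<le> pstar" by (rule tendsto_lowerbound[OF p_lim]) (simp add: trivial_limit_at_left_real)
    then show ?thesis using pts by simp
  qed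
  have dq0: "\<forall>t\<in>K0. (q has_real_derivative e (p t)) (at t within K0)"
  proof
    fix t assume t: "t \<in> K0"
    then have t0: "t \<in> {0..<tstar}" using K0sub by auto
    obtain D where D: "(bloch_E V n has_real_derivative D) (at (p t))" "(q has_real_derivative D) (at t within {0..<tstar})"
      using tsol t0 by blast
    have ptU: "p t \<in> U" using pK0[OF t] Up by blast
    have "(bloch_E V n has_real_derivative e (p t)) (at (p t))"
    proof (rule has_field_derivative_transform_within_open[OF dE[OF ptU], of "U \<inter> {..<pstar}"])
      show "open (U \<inter> {..<pstar})" using U_open by auto
      show "p t \<in> U \<inter> {..<pstar}" using ptU p_lt[OF t] by auto
      fix x assume "x \<in> U \<inter> {..<pstar}"
      then show "Eplus x = bloch_E V n x" by (simp add: Eplus_def)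
    qed
    then have "D = e (p t)" using D(1) DERIV_unique by blast
    then show "(q has_real_derivative e (p t)) (at t within K0)" using D(2) K0sub DERIV_subset by blast
  qed
  show ?thesis
  proof (intro exI[of _ "min (h/2) (tstar - c0)"] conjI allI impI)
    show "0 < min (h/2) (tstar - c0)" using h0 c0 by simp
  next
    fix \<delta> assume \<delta>: "0 < \<delta> \<and> \<delta> < min (h/2) (tstar - c0) \<and> \<delta> < tstar"
    define I\<delta> where "I\<delta> = {tstar - \<delta>..tstar + \<delta>}"
    have I\<delta>I: "I\<delta> \<subseteq> I" using \<delta> by (auto simp: I\<delta>_def I_def)
    have I\<delta>int: "is_interval I\<delta>" by (simp add: I\<delta>_def is_interval_convex_1)
    have tI\<delta>: "tstar \<in> I\<delta>" using \<delta> by (simp add: I\<delta>_def)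
    have s1: "C_inf {tstar - \<delta>..tstar + \<delta>} (\<lambda>t. (qs t, ps t))"
      using C_inf_subset[OF Csol I\<delta>I] by (simp add: I\<delta>_def)
    have s2: "flow_sol Eplus W {tstar - \<delta>..tstar + \<delta>} qs ps"
      unfolding flow_sol_def
    proof (intro ballI conjI)
      fix t assume "t \<in> {tstar - \<delta>..tstar + \<delta>}"
      then have t: "t \<in> I\<delta>" "t \<in> I" using I\<delta>I by (auto simp: I\<delta>_def)
      show "\<exists>D. (Eplus has_real_derivative D) (at (ps t)) \<and> (qs has_real_derivative D) (at t within {tstar - \<delta>..tstar + \<delta>})"
        using dE[of "ps t"] psU dqs t I\<delta>I unfolding I\<delta>_def by (meson DERIV_subset)
      show "(ps has_real_derivative - deriv W (qs t)) (at t within {tstar - \<delta>..tstar + \<delta>})"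
        using dps t I\<delta>I dWeq unfolding I\<delta>_def by (metis DERIV_subset)
    qed
    have s3: "\<forall>t\<in>{tstar - \<delta>..tstar + \<delta>}. ps t \<in> U" using psU I\<delta>I by (auto simp: I\<delta>_def)
    have s5: "\<forall>q' p'. C_inf {tstar - \<delta>..tstar + \<delta>} (\<lambda>t. (q' t, p' t)) \<and>
                flow_sol Eplus W {tstar - \<delta>..tstar + \<delta>} q' p' \<and>
                (\<forall>t\<in>{tstar - \<delta>..tstar + \<delta>}. p' t \<in> U) \<and>
                q' tstar = qstar \<and> p' tstar = pstar
                \<longrightarrow> (\<forall>t\<in>{tstar - \<delta>..tstar + \<delta>}. q' t = qs t \<and> p' t = ps t)"
    proof (intro allI impI)
      fix q' p' assume H: "C_inf {tstar - \<delta>..tstar + \<delta>} (\<lambda>t. (q' t, p' t)) \<and>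
                flow_sol Eplus W {tstar - \<delta>..tstar + \<delta>} q' p' \<and>
                (\<forall>t\<in>{tstar - \<delta>..tstar + \<delta>}. p' t \<in> U) \<and>
                q' tstar = qstar \<and> p' tstar = pstar"
      have fs: "\<forall>t\<in>I\<delta>. (\<exists>D. (Eplus has_real_derivative D) (at (p' t)) \<and> (q' has_real_derivative D) (at t within I\<delta>))
           \<and> (p' has_real_derivative - deriv W (q' t)) (at t within I\<delta>)"
        using H unfolding flow_sol_def I\<delta>_def by blast
      have d1q: "\<forall>t\<in>I\<delta>. (q' has_real_derivative e (p' t)) (at t within I\<delta>)"
      proof
        fix t assume t: "t \<in> I\<delta>"
        obtain D where D: "(Eplus has_real_derivative D) (at (p' t))" "(q' has_real_derivative D) (at t within I\<delta>)"
          using fs t by blast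
        have "p' t \<in> U" using H t by (auto simp: I\<delta>_def)
        then have "D = e (p' t)" using D(1) dE DERIV_unique by blast
        then show "(q' has_real_derivative e (p' t)) (at t within I\<delta>)" using D(2) by simp
      qed
      have d1p: "\<forall>t\<in>I\<delta>. (p' has_real_derivative (\<lambda>x. - w x) (q' t)) (at t within I\<delta>)"
        using fs dWeq by simp
      have d2q: "\<forall>t\<in>I\<delta>. (qs has_real_derivative e (ps t)) (at t within I\<delta>)"
        using dqs I\<delta>I DERIV_subset by blast
      have d2p: "\<forall>t\<in>I\<delta>. (ps has_real_derivative (\<lambda>x. - w x) (qs t)) (at t within I\<delta>)"
        using dps I\<delta>I DERIV_subset by (metis subsetD)
      have half: "\<forall>t\<in>I\<delta>. \<bar>qs t - qstar\<bar> \<le> r/2 \<and> \<bar>ps t - pstar\<bar> \<le> r/2"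
        using qs_close ps_close I\<delta>I by blast
      have "\<forall>t\<in>I\<delta>. q' t = qs t \<and> p' t = ps t"
        by (rule sol_unique_clopen[where ?q1.0 = q' and ?p1.0 = p' and ?q2.0 = qs and ?p2.0 = ps and ef = e and wf = "\<lambda>x. - w x",
              OF I\<delta>int tI\<delta> _ _ r(1) L0 half lipe lipw' d1q d1p d2q d2p])
           (use H qs_star ps_star in auto)
      then show "\<forall>t\<in>{tstar - \<delta>..tstar + \<delta>}. q' t = qs t \<and> p' t = ps t" by (simp add: I\<delta>_def)
    qed
    have s6: "\<forall>t\<in>{tstar - \<delta>..<tstar}. q t = qs t \<and> p t = ps t"
    proof -
      define K where "K = {tstar - \<delta>..<tstar}"
      have KK0: "K \<subseteq> K0" using \<delta> by (auto simp: K_def K0_def)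
      have KI: "K \<subseteq> I" using \<delta> by (auto simp: K_def I_def)
      show ?thesis
      proof (rule sol_agree_left[where ?q1.0 = q and ?p1.0 = p and ?q2.0 = qs and ?p2.0 = ps and f = e and g = "\<lambda>x. - w x", OF L0])
        show "\<forall>t\<in>{tstar - \<delta>..<tstar}. \<bar>e (p t) - e (ps t)\<bar> \<le> L * \<bar>p t - ps t\<bar>"
          using lipe pK0 ps_cb KK0 KI unfolding K_def by blast
        show "\<forall>t\<in>{tstar - \<delta>..<tstar}. \<bar>(\<lambda>x. - w x) (q t) - (\<lambda>x. - w x) (qs t)\<bar> \<le> L * \<bar>q t - qs t\<bar>"
          using lipw' qK0 qs_cb KK0 KI unfolding K_def by blast
        show "\<forall>t\<in>{tstar - \<delta>..<tstar}. (q has_real_derivative e (p t)) (at t within {tstar - \<delta>..<tstar})"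
          using dq0 KK0 DERIV_subset unfolding K_def by blast
        show "\<forall>t\<in>{tstar - \<delta>..<tstar}. (p has_real_derivative (\<lambda>x. - w x) (q t)) (at t within {tstar - \<delta>..<tstar})"
          using dp0 KK0 DERIV_subset unfolding K_def by (metis subsetD)
        show "\<forall>t\<in>{tstar - \<delta>..<tstar}. (qs has_real_derivative e (ps t)) (at t within {tstar - \<delta>..<tstar})"
          using dqs KI DERIV_subset unfolding K_def by blast
        show "\<forall>t\<in>{tstar - \<delta>..<tstar}. (ps has_real_derivative (\<lambda>x. - w x) (qs t)) (at t within {tstar - \<delta>..<tstar})"
          using dps KI DERIV_subset unfolding K_def by (metis subsetD)
        show "((\<lambda>t. q t - qs t) \<longlongrightarrow> 0) (at_left tstar)"
          using tendsto_diff[OF q_lim qs_lim] by simp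
        show "((\<lambda>t. p t - ps t) \<longlongrightarrow> 0) (at_left tstar)"
          using tendsto_diff[OF p_lim ps_lim] by simp
      qed
    qed
    show "\<exists>qp pp. C_inf {tstar - \<delta>..tstar + \<delta>} (\<lambda>t. (qp t, pp t)) \<and>
       flow_sol Eplus W {tstar - \<delta>..tstar + \<delta>} qp pp \<and>
       (\<forall>t\<in>{tstar - \<delta>..tstar + \<delta>}. pp t \<in> U) \<and>
       qp tstar = qstar \<and> pp tstar = pstar \<and>
       (\<forall>q' p'. C_inf {tstar - \<delta>..tstar + \<delta>} (\<lambda>t. (q' t, p' t)) \<and>
                flow_sol Eplus W {tstar - \<delta>..tstar + \<delta>} q' p' \<and>
                (\<forall>t\<in>{tstar - \<delta>..tstar + \<delta>}. p' t \<in> U) \<and>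
                q' tstar = qstar \<and> p' tstar = pstar
                \<longrightarrow> (\<forall>t\<in>{tstar - \<delta>..tstar + \<delta>}. q' t = qp t \<and> p' t = pp t)) \<and>
       (\<forall>t\<in>{tstar - \<delta>..<tstar}. q t = qp t \<and> p t = pp t) \<and>
       (\<exists>T0 > tstar + \<delta>. \<forall>T. tstar + \<delta> \<le> T \<and> T \<le> T0 \<longrightarrow>
          (\<exists>qn pn :: real \<Rightarrow> real.
             C_inf {tstar<..T} (\<lambda>t. (qn t, pn t)) \<and>
             flow_sol (bloch_E V (Suc n)) W {tstar<..T} qn pn \<and>
             ((\<lambda>t. (qn t, pn t)) \<longlongrightarrow> (qstar, pstar)) (at_right tstar) \<and>
             (\<forall>t\<in>{tstar<..T}. bloch_gap V (Suc n) (pn t) > 0) \<and>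
             (\<forall>t\<in>{tstar<..tstar + \<delta>}. qp t = qn t \<and> pp t = pn t) \<and>
             C_inf {0..T} (\<lambda>t. if t \<le> tstar - \<delta> then (q t, p t)
                               else if t \<le> tstar + \<delta> then (qp t, pp t)
                               else (qn t, pn t))))"
    proof (rule exI[of _ qs], rule exI[of _ ps], intro conjI s1 s2 s3 s5 s6 qs_star ps_star)
      show "\<exists>T0 > tstar + \<delta>. \<forall>T. tstar + \<delta> \<le> T \<and> T \<le> T0 \<longrightarrow>
          (\<exists>qn pn :: real \<Rightarrow> real.
             C_inf {tstar<..T} (\<lambda>t. (qn t, pn t)) \<and>
             flow_sol (bloch_E V (Suc n)) W {tstar<..T} qn pn \<and>
             ((\<lambda>t. (qn t, pn t)) \<longlongrightarrow> (qstar, pstar)) (at_right tstar) \<and>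
             (\<forall>t\<in>{tstar<..T}. bloch_gap V (Suc n) (pn t) > 0) \<and>
             (\<forall>t\<in>{tstar<..tstar + \<delta>}. qs t = qn t \<and> ps t = pn t) \<and>
             C_inf {0..T} (\<lambda>t. if t \<le> tstar - \<delta> then (q t, p t)
                               else if t \<le> tstar + \<delta> then (qs t, ps t)
                               else (qn t, pn t)))"
    proof (intro exI[of _ "tstar + h"] conjI allI impI)
      show "tstar + \<delta> < tstar + h" using \<delta> by simp
    next
      fix T assume T: "tstar + \<delta> \<le> T \<and> T \<le> tstar + h"
      have T0: "0 < T" using T \<delta> tstar_pos by linarith
      have TI: "{tstar<..T} \<subseteq> I" using T h0 by (auto simp: I_def)
      show "\<exists>qn pn :: real \<Rightarrow> real.
             C_inf {tstar<..T} (\<lambda>t. (qn t, pn t)) \<and>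
             flow_sol (bloch_E V (Suc n)) W {tstar<..T} qn pn \<and>
             ((\<lambda>t. (qn t, pn t)) \<longlongrightarrow> (qstar, pstar)) (at_right tstar) \<and>
             (\<forall>t\<in>{tstar<..T}. bloch_gap V (Suc n) (pn t) > 0) \<and>
             (\<forall>t\<in>{tstar<..tstar + \<delta>}. qs t = qn t \<and> ps t = pn t) \<and>
             C_inf {0..T} (\<lambda>t. if t \<le> tstar - \<delta> then (q t, p t)
                               else if t \<le> tstar + \<delta> then (qs t, ps t)
                               else (qn t, pn t))"
      proof (rule exI[of _ qs], rule exI[of _ ps], intro conjI)
        show "C_inf {tstar<..T} (\<lambda>t. (qs t, ps t))" using C_inf_subset[OF Csol TI] .
        show "flow_sol (bloch_E V (Suc n)) W {tstar<..T} qs ps"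
          unfolding flow_sol_def
        proof (intro ballI conjI)
          fix t assume t: "t \<in> {tstar<..T}"
          then have tI': "t \<in> I" using TI by auto
          have ptU: "ps t \<in> U" using psU tI' by blast
          have gt: "pstar < ps t" using ps_gt[OF tI'] t by auto
          have "(bloch_E V (Suc n) has_real_derivative e (ps t)) (at (ps t))"
          proof (rule has_field_derivative_transform_within_open[OF dE[OF ptU], of "U \<inter> {pstar<..}"])
            show "open (U \<inter> {pstar<..})" using U_open by auto
            show "ps t \<in> U \<inter> {pstar<..}" using ptU gt by auto
            fix x assume "x \<in> U \<inter> {pstar<..}"
            then show "Eplus x = bloch_E V (Suc n) x" by (simp add: Eplus_def)
          qed
          moreover have "(qs has_real_derivative e (ps t)) (at t within {tstar<..T})"
            using dqs tI' TI DERIV_subset by blast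
          ultimately show "\<exists>D. (bloch_E V (Suc n) has_real_derivative D) (at (ps t)) \<and> (qs has_real_derivative D) (at t within {tstar<..T})"
            by blast
          show "(ps has_real_derivative - deriv W (qs t)) (at t within {tstar<..T})"
            using dps tI' TI dWeq by (metis DERIV_subset)
        qed
        show "((\<lambda>t. (qs t, ps t)) \<longlongrightarrow> (qstar, pstar)) (at_right tstar)"
        proof -
          have "(z \<longlongrightarrow> z tstar) (at tstar)" using zcont by (simp add: isCont_def)
          then have "(z \<longlongrightarrow> (qstar, pstar)) (at_right tstar)" using z0 tendsto_mono[OF at_within_le_at] by metis
          then show ?thesis by (simp add: zeq)
        qed
        show "\<forall>t\<in>{tstar<..T}. bloch_gap V (Suc n) (ps t) > 0"
        proof
          fix t assume t: "t \<in> {tstar<..T}"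
          then have tI': "t \<in> I" using TI by auto
          show "bloch_gap V (Suc n) (ps t) > 0"
            by (rule gap_pos[OF A1(2) A2 n_pos]) (use psU tI' ps_gt[OF tI'] t in auto)
        qed
        show "\<forall>t\<in>{tstar<..tstar + \<delta>}. qs t = qs t \<and> ps t = ps t" by simp
        define G where "G = (\<lambda>t. if t \<le> tstar - \<delta> then (q t, p t)
                               else if t \<le> tstar + \<delta> then (qs t, ps t)
                               else (qs t, ps t))"
        have "C_inf {0..T} G"
        proof (rule C_inf_glue[of "{..<tstar}" "{tstar - \<delta><..}"])
          show "open {..<tstar}" by simp
          show "open {tstar - \<delta><..}" by simp
          show "{0..T} \<subseteq> {..<tstar} \<union> {tstar - \<delta><..}" using \<delta> by auto
          have sA: "{0..T} \<inter> {..<tstar} \<subseteq> {0..<tstar}" by auto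
          show "C_inf ({0..T} \<inter> {..<tstar}) G"
          proof (rule C_inf_cong[OF C_inf_subset[OF traj_smooth sA]])
            fix x assume x: "x \<in> {0..T} \<inter> {..<tstar}"
            show "(q x, p x) = G x"
            proof (cases "x \<le> tstar - \<delta>")
              case True then show ?thesis by (simp add: G_def)
            next
              case False
              then have "x \<in> {tstar - \<delta>..<tstar}" using x by auto
              then have "q x = qs x \<and> p x = ps x" using s6 by blast
              then show ?thesis using False by (simp add: G_def)
            qed
          qed
          have sB: "{0..T} \<inter> {tstar - \<delta><..} \<subseteq> I" using T \<delta> by (auto simp: I_def)
          show "C_inf ({0..T} \<inter> {tstar - \<delta><..}) G"
            by (rule C_inf_cong[OF C_inf_subset[OF Csol sB]]) (auto simp: G_def)
          fix x assume "x \<in> {0..T}"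
          then show "at x within {0..T} \<noteq> bot" using T0 by (simp add: trivial_limit_within)
        qed
        then show "C_inf {0..T} (\<lambda>t. if t \<le> tstar - \<delta> then (q t, p t)
                               else if t \<le> tstar + \<delta> then (qs t, ps t)
                               else (qs t, ps t))" by (simp add: G_def)
      qed
    qed
    qed
  qed
qed

end
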